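(* Let $(S,\|\cdot\|)$ be a complete $RN$ module over $K$ with base $(\Omega,\mathcal F,P)$, and let $A:D(A)\subset S\to S$ be a module homomorphism with $L^{0}_{++}(\mathcal F)\subset\rho(A)$. If there exists $M\in L^{0}_{+}(\mathcal F)$ with $M\geq1$ such that $\|\xi^{n}R(\xi,A)^{n}\|\leq M$ for any $n\in N$ and $\xi\in L^{0}_{++}(\mathcal F)$, then there exists an $L^{0}$-norm $|\cdot|$ on $S$ which is equivalent to $\|\cdot\|$ and satisfies $\|x\|\leq|x|\leq M\|x\|$ for any $x\in S$, and $|\xi R(\xi,A)x|\leq|x|$ for any $x\in S$ and $\xi\in L^{0}_{++}(\mathcal F)$.
   Context: $(\Omega,\mathcal F,P)$ is a probability space; $L^{0}(\mathcal F,K)$ ($K=R$ or $C$) is the algebra of equivalence classes of $K$-valued $\mathcal F$-measurable random variables, ordered a.s.; $L^{0}_{+}(\mathcal F)=\{\xi\in L^0(\mathcal F,R):\xi\ge 0\}$, $L^{0}_{++}(\mathcal F)=\{\xi\in L^0(\mathcal F,R):\xi>0\text{ a.s.}\}$. An $RN$ module over $K$ with base $(\Omega,\mathcal F,P)$ is a left $L^0(\mathcal F,K)$-module $S$ with a map $\|\cdot\|:S\to L^0_+(\mathcal F)$ (an $L^0$-norm) such that $\|\xi x\|=|\xi|\|x\|$, $\|x+y\|\le\|x\|+\|y\|$, $\|x\|=0\Rightarrow x=0$; it carries the $(\varepsilon,\lambda)$-topology ($x_n\to x$ iff $\|x_n-x\|\to0$ in probability); completeness refers to this topology. Two $L^0$-norms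 are equivalent if they induce the same $(\varepsilon,\lambda)$-topology. $B(S)$ is the set of continuous module homomorphisms $S\to S$, with $\|T\|=\bigwedge\{\xi\in L^0_+(\mathcal F):\|Tx\|\le\xi\|x\|\ \forall x\}$. $\rho(A)=\{\xi\in L^0(\mathcal F,K):\xi I-A:D(A)\to S\text{ is bijective and }(\xi I-A)^{-1}\in B(S)\}$, $R(\xi,A)=(\xi I-A)^{-1}$. *)

theory Defs
  imports "HOL-Probability.Probability"
begin

text \<open>Random variables are represented by measurable functions; equivalence
classes are handled by stating every (in)equality almost everywhere.\<close>

definition L0 :: "'w measure \<Rightarrow> ('w \<Rightarrow> 'k::real_normed_field) set" where
  "L0 M = borel_measurable M"

definition L0_plus :: "'w measure \<Rightarrow> ('w \<Rightarrow> real) set" where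
  "L0_plus M = {\<xi> \<in> borel_measurable M. AE \<omega> in M. \<xi> \<omega> \<ge> 0}"

definition L0_pp :: "'w measure \<Rightarrow> ('w \<Rightarrow> real) set" where
  "L0_pp M = {\<xi> \<in> borel_measurable M. AE \<omega> in M. \<xi> \<omega> > 0}"

definition is_L0_module ::
  "'w measure \<Rightarrow> (('w \<Rightarrow> 'k::real_normed_field) \<Rightarrow> 's::ab_group_add \<Rightarrow> 's) \<Rightarrow> bool" where
  "is_L0_module M sm \<longleftrightarrow>
     (\<forall>\<xi>\<in>L0 M. \<forall>\<eta>\<in>L0 M. (AE \<omega> in M. \<xi> \<omega> = \<eta> \<omega>) \<longrightarrow> (\<forall>x. sm \<xi> x = sm \<eta> x)) \<and>
     (\<forall>\<xi>\<in>L0 M. \<forall>x y. sm \<xi> (x + y) = sm \<xi> x + sm \<xi> y) \<and>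
     (\<forall>\<xi>\<in>L0 M. \<forall>\<eta>\<in>L0 M. \<forall>x. sm (\<lambda>\<omega>. \<xi> \<omega> + \<eta> \<omega>) x = sm \<xi> x + sm \<eta> x) \<and>
     (\<forall>\<xi>\<in>L0 M. \<forall>\<eta>\<in>L0 M. \<forall>x. sm (\<lambda>\<omega>. \<xi> \<omega> * \<eta> \<omega>) x = sm \<xi> (sm \<eta> x)) \<and>
     (\<forall>x. sm (\<lambda>\<omega>. 1) x = x)"

definition is_L0_norm ::
  "'w measure \<Rightarrow> (('w \<Rightarrow> 'k::real_normed_field) \<Rightarrow> 's::ab_group_add \<Rightarrow> 's)
     \<Rightarrow> ('s \<Rightarrow> 'w \<Rightarrow> real) \<Rightarrow> bool" where
  "is_L0_norm M sm nrm \<longleftrightarrow>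
     (\<forall>x. nrm x \<in> L0_plus M) \<and>
     (\<forall>\<xi>\<in>L0 M. \<forall>x. AE \<omega> in M. nrm (sm \<xi> x) \<omega> = norm (\<xi> \<omega>) * nrm x \<omega>) \<and>
     (\<forall>x y. AE \<omega> in M. nrm (x + y) \<omega> \<le> nrm x \<omega> + nrm y \<omega>) \<and>
     (\<forall>x. (AE \<omega> in M. nrm x \<omega> = 0) \<longrightarrow> x = 0)"

definition is_RN_module ::
  "'w measure \<Rightarrow> (('w \<Rightarrow> 'k::real_normed_field) \<Rightarrow> 's::ab_group_add \<Rightarrow> 's)
     \<Rightarrow> ('s \<Rightarrow> 'w \<Rightarrow> real) \<Rightarrow> bool" where
  "is_RN_module M sm nrm \<longleftrightarrow> prob_space M \<and> is_L0_module M sm \<and> is_L0_norm M sm nrm"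

text \<open>Convergence in the (epsilon,lambda)-topology: the norm of the difference
tends to 0 in probability.  The topology is metrizable, so it is determined
by its convergent sequences.\<close>
definition eps_lambda_conv ::
  "'w measure \<Rightarrow> ('s::ab_group_add \<Rightarrow> 'w \<Rightarrow> real) \<Rightarrow> (nat \<Rightarrow> 's) \<Rightarrow> 's \<Rightarrow> bool" where
  "eps_lambda_conv M nrm xs x \<longleftrightarrow>
     (\<forall>\<epsilon>>0. (\<lambda>n. measure M {\<omega> \<in> space M. nrm (xs n - x) \<omega> \<ge> \<epsilon>}) \<longlonglongrightarrow> 0)"

definition eps_lambda_Cauchy ::
  "'w measure \<Rightarrow> ('s::ab_group_add \<Rightarrow> 'w \<Rightarrow> real) \<Rightarrow> (nat \<Rightarrow> 's) \<Rightarrow> bool" where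
  "eps_lambda_Cauchy M nrm xs \<longleftrightarrow>
     (\<forall>\<epsilon>>0. \<forall>\<delta>>0. \<exists>N. \<forall>m\<ge>N. \<forall>n\<ge>N.
        measure M {\<omega> \<in> space M. nrm (xs n - xs m) \<omega> \<ge> \<epsilon>} < \<delta>)"

definition eps_lambda_complete ::
  "'w measure \<Rightarrow> ('s::ab_group_add \<Rightarrow> 'w \<Rightarrow> real) \<Rightarrow> bool" where
  "eps_lambda_complete M nrm \<longleftrightarrow>
     (\<forall>xs. eps_lambda_Cauchy M nrm xs \<longrightarrow> (\<exists>x. eps_lambda_conv M nrm xs x))"

definition equivalent_L0_norms ::
  "'w measure \<Rightarrow> ('s::ab_group_add \<Rightarrow> 'w \<Rightarrow> real) \<Rightarrow> ('s \<Rightarrow> 'w \<Rightarrow> real) \<Rightarrow> bool" where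
  "equivalent_L0_norms M n1 n2 \<longleftrightarrow>
     (\<forall>xs x. eps_lambda_conv M n1 xs x \<longleftrightarrow> eps_lambda_conv M n2 xs x)"

definition is_submodule ::
  "'w measure \<Rightarrow> (('w \<Rightarrow> 'k::real_normed_field) \<Rightarrow> 's::ab_group_add \<Rightarrow> 's) \<Rightarrow> 's set \<Rightarrow> bool" where
  "is_submodule M sm D \<longleftrightarrow> 0 \<in> D \<and> (\<forall>x\<in>D. \<forall>y\<in>D. x + y \<in> D) \<and>
     (\<forall>\<xi>\<in>L0 M. \<forall>x\<in>D. sm \<xi> x \<in> D)"

definition is_module_hom ::
  "'w measure \<Rightarrow> (('w \<Rightarrow> 'k::real_normed_field) \<Rightarrow> 's::ab_group_add \<Rightarrow> 's) \<Rightarrow> 's set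
     \<Rightarrow> ('s \<Rightarrow> 's) \<Rightarrow> bool" where
  "is_module_hom M sm D T \<longleftrightarrow>
     (\<forall>x\<in>D. \<forall>y\<in>D. T (x + y) = T x + T y) \<and>
     (\<forall>\<xi>\<in>L0 M. \<forall>x\<in>D. T (sm \<xi> x) = sm \<xi> (T x))"

text \<open>B(S): continuous module homomorphisms S -> S (sequential continuity
suffices since the (epsilon,lambda)-topology is metrizable).\<close>
definition in_BS ::
  "'w measure \<Rightarrow> (('w \<Rightarrow> 'k::real_normed_field) \<Rightarrow> 's::ab_group_add \<Rightarrow> 's)
     \<Rightarrow> ('s \<Rightarrow> 'w \<Rightarrow> real) \<Rightarrow> ('s \<Rightarrow> 's) \<Rightarrow> bool" where
  "in_BS M sm nrm T \<longleftrightarrow> is_module_hom M sm UNIV T \<and>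
     (\<forall>xs x. eps_lambda_conv M nrm xs x \<longrightarrow> eps_lambda_conv M nrm (\<lambda>n. T (xs n)) (T x))"

definition is_L0_inf :: "'w measure \<Rightarrow> ('w \<Rightarrow> real) set \<Rightarrow> ('w \<Rightarrow> real) \<Rightarrow> bool" where
  "is_L0_inf M F g \<longleftrightarrow> g \<in> borel_measurable M \<and>
     (\<forall>f\<in>F. AE \<omega> in M. g \<omega> \<le> f \<omega>) \<and>
     (\<forall>h\<in>borel_measurable M. (\<forall>f\<in>F. AE \<omega> in M. h \<omega> \<le> f \<omega>) \<longrightarrow> (AE \<omega> in M. h \<omega> \<le> g \<omega>))"

definition L0_opnorm ::
  "'w measure \<Rightarrow> ('s::ab_group_add \<Rightarrow> 'w \<Rightarrow> real) \<Rightarrow> ('s \<Rightarrow> 's) \<Rightarrow> 'w \<Rightarrow> real" where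
  "L0_opnorm M nrm T = (SOME g. is_L0_inf M
      {\<zeta> \<in> L0_plus M. \<forall>x. AE \<omega> in M. nrm (T x) \<omega> \<le> \<zeta> \<omega> * nrm x \<omega>} g)"

definition shifted_op ::
  "(('w \<Rightarrow> 'k::real_normed_field) \<Rightarrow> 's::ab_group_add \<Rightarrow> 's) \<Rightarrow> ('w \<Rightarrow> 'k) \<Rightarrow> ('s \<Rightarrow> 's) \<Rightarrow> 's \<Rightarrow> 's" where
  "shifted_op sm \<xi> A = (\<lambda>x. sm \<xi> x - A x)"

definition resolvent ::
  "(('w \<Rightarrow> 'k::real_normed_field) \<Rightarrow> 's::ab_group_add \<Rightarrow> 's) \<Rightarrow> 's set \<Rightarrow> ('s \<Rightarrow> 's)
     \<Rightarrow> ('w \<Rightarrow> 'k) \<Rightarrow> 's \<Rightarrow> 's" where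
  "resolvent sm D A \<xi> = the_inv_into D (shifted_op sm \<xi> A)"

definition resolvent_set ::
  "'w measure \<Rightarrow> (('w \<Rightarrow> 'k::real_normed_field) \<Rightarrow> 's::ab_group_add \<Rightarrow> 's)
     \<Rightarrow> ('s \<Rightarrow> 'w \<Rightarrow> real) \<Rightarrow> 's set \<Rightarrow> ('s \<Rightarrow> 's) \<Rightarrow> ('w \<Rightarrow> 'k) set" where
  "resolvent_set M sm nrm D A = {\<xi> \<in> L0 M.
      bij_betw (shifted_op sm \<xi> A) D UNIV \<and> in_BS M sm nrm (resolvent sm D A \<xi>)}"

end

theory Submission
  imports Defs
begin

locale rnm =
  fixes M :: "'w measure"
    and sm :: "('w \<Rightarrow> 'k::real_normed_field) \<Rightarrow> 's::ab_group_add \<Rightarrow> 's"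
    and nrm :: "'s \<Rightarrow> 'w \<Rightarrow> real"
  assumes RN: "is_RN_module M sm nrm"
begin

lemma prob: "prob_space M" using RN by (simp add: is_RN_module_def)
lemma modl: "is_L0_module M sm" using RN by (simp add: is_RN_module_def)
lemma nrml: "is_L0_norm M sm nrm" using RN by (simp add: is_RN_module_def)

lemma L0_iff: "\<xi> \<in> L0 M \<longleftrightarrow> \<xi> \<in> borel_measurable M" by (simp add: L0_def)

lemma sm_cong: "\<xi> \<in> L0 M \<Longrightarrow> \<eta> \<in> L0 M \<Longrightarrow> (AE \<omega> in M. \<xi> \<omega> = \<eta> \<omega>) \<Longrightarrow> sm \<xi> x = sm \<eta> x"
  using modl unfolding is_L0_module_def by blast
lemma sm_add_vec: "\<xi> \<in> L0 M \<Longrightarrow> sm \<xi> (x + y) = sm \<xi> x + sm \<xi> y"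
  using modl unfolding is_L0_module_def by blast
lemma sm_add_sc: "\<xi> \<in> L0 M \<Longrightarrow> \<eta> \<in> L0 M \<Longrightarrow> sm (\<lambda>\<omega>. \<xi> \<omega> + \<eta> \<omega>) x = sm \<xi> x + sm \<eta> x"
  using modl unfolding is_L0_module_def by blast
lemma sm_mult: "\<xi> \<in> L0 M \<Longrightarrow> \<eta> \<in> L0 M \<Longrightarrow> sm (\<lambda>\<omega>. \<xi> \<omega> * \<eta> \<omega>) x = sm \<xi> (sm \<eta> x)"
  using modl unfolding is_L0_module_def by blast
lemma sm_one: "sm (\<lambda>\<omega>. 1) x = x"
  using modl unfolding is_L0_module_def by blast

lemma sm_zero_vec: "\<xi> \<in> L0 M \<Longrightarrow> sm \<xi> 0 = 0"
  using sm_add_vec[of \<xi> 0 0] by simp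
lemma sm_minus_vec: "\<xi> \<in> L0 M \<Longrightarrow> sm \<xi> (- x) = - sm \<xi> x"
  using sm_add_vec[of \<xi> x "-x"] sm_zero_vec[of \<xi>] by (metis add.commute eq_neg_iff_add_eq_0)
lemma sm_diff_vec: "\<xi> \<in> L0 M \<Longrightarrow> sm \<xi> (x - y) = sm \<xi> x - sm \<xi> y"
  using sm_add_vec[of \<xi> x "-y"] sm_minus_vec[of \<xi> y] by simp

lemma L0_const[simp]: "(\<lambda>\<omega>. c) \<in> L0 M" by (simp add: L0_def)

lemma sm_zero_sc: "sm (\<lambda>\<omega>. 0) x = 0"
  using sm_add_sc[of "\<lambda>\<omega>. 0" "\<lambda>\<omega>. 0" x] by simp

lemma sm_comm: "\<xi> \<in> L0 M \<Longrightarrow> \<eta> \<in> L0 M \<Longrightarrow> sm \<xi> (sm \<eta> x) = sm \<eta> (sm \<xi> x)"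
  using sm_mult[of \<xi> \<eta> x] sm_mult[of \<eta> \<xi> x] by (simp add: mult.commute)

lemma sm_neg_one: "sm (\<lambda>\<omega>. - 1) x = - x"
proof -
  have "sm (\<lambda>\<omega>. - 1) x + x = 0"
    using sm_add_sc[of "\<lambda>\<omega>. - 1" "\<lambda>\<omega>. 1" x] sm_one[of x] sm_zero_sc[of x] by simp
  then show ?thesis by (metis add.commute eq_neg_iff_add_eq_0)
qed

lemma nrm_meas[measurable]: "nrm x \<in> borel_measurable M"
  using nrml unfolding is_L0_norm_def L0_plus_def by blast
lemma nrm_nonneg: "AE \<omega> in M. 0 \<le> nrm x \<omega>"
  using nrml unfolding is_L0_norm_def L0_plus_def by blast
lemma nrm_sm: "\<xi> \<in> L0 M \<Longrightarrow> AE \<omega> in M. nrm (sm \<xi> x) \<omega> = norm (\<xi> \<omega>) * nrm x \<omega>"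
  using nrml unfolding is_L0_norm_def by blast
lemma nrm_tri: "AE \<omega> in M. nrm (x + y) \<omega> \<le> nrm x \<omega> + nrm y \<omega>"
  using nrml unfolding is_L0_norm_def by blast
lemma nrm_eq0: "(AE \<omega> in M. nrm x \<omega> = 0) \<Longrightarrow> x = 0"
  using nrml unfolding is_L0_norm_def by blast
lemma nrm_zero: "AE \<omega> in M. nrm 0 \<omega> = 0"
  using nrm_sm[of "\<lambda>\<omega>. 0" 0] sm_zero_sc[of 0] by simp
lemma nrm_minus: "AE \<omega> in M. nrm (- x) \<omega> = nrm x \<omega>"
  using nrm_sm[of "\<lambda>\<omega>. - 1" x] sm_neg_one[of x] by simp

end

lemma hom_zero: "is_module_hom M sm UNIV T \<Longrightarrow> T 0 = 0"
  unfolding is_module_hom_def by (metis UNIV_I add_cancel_right_right add_0)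
lemma hom_add: "is_module_hom M sm UNIV T \<Longrightarrow> T (x + y) = T x + T y"
  unfolding is_module_hom_def by blast
lemma hom_sm: "is_module_hom M sm UNIV T \<Longrightarrow> \<xi> \<in> L0 M \<Longrightarrow> T (sm \<xi> x) = sm \<xi> (T x)"
  unfolding is_module_hom_def by blast
lemma hom_minus: "is_module_hom M sm UNIV T \<Longrightarrow> T (- x) = - T x"
  using hom_add[of M sm T x "-x"] hom_zero[of M sm T] by (metis add.commute eq_neg_iff_add_eq_0)
lemma hom_diff: "is_module_hom M sm UNIV T \<Longrightarrow> T (x - y) = T x - T y"
  using hom_add[of M sm T x "-y"] hom_minus[of M sm T y] by simp

lemma sup_as_inf_real: "(SUP k. (a::nat\<Rightarrow>real) k) = - (INF k. - a k)"
  unfolding Inf_real_def by (simp add: image_image)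

lemma borel_measurable_SUP_nat_real[measurable]:
  fixes F :: "nat \<Rightarrow> 'w \<Rightarrow> real"
  assumes [measurable]: "\<And>i. F i \<in> borel_measurable M"
  shows "(\<lambda>x. SUP i. F i x) \<in> borel_measurable M"
  unfolding sup_as_inf_real by measurable

lemma max_arctan_bnd: "\<bar>b\<bar> \<le> pi/2 \<Longrightarrow> norm (max (arctan a) b) \<le> pi/2"
  using arctan_bounded[of a] by (auto simp: max_def abs_le_iff)

lemma max_arctan_bnd2: "norm (max (arctan a) (arctan b)) \<le> pi/2"
  using arctan_bounded[of b] by (intro max_arctan_bnd) (auto simp: abs_le_iff)

lemma directed_esssup:
  fixes M :: "'w measure" and F :: "('w \<Rightarrow> real) set"
  assumes P: "prob_space M" and Fm: "F \<subseteq> borel_measurable M" and Fne: "F \<noteq> {}"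
    and dir: "\<forall>f\<in>F. \<forall>g\<in>F. \<exists>h\<in>F. AE \<omega> in M. f \<omega> \<le> h \<omega> \<and> g \<omega> \<le> h \<omega>"
  shows "\<exists>fs. (\<forall>k. fs k \<in> F) \<and> (AE \<omega> in M. \<forall>k. fs k \<omega> \<le> fs (Suc k) \<omega>) \<and>
        (\<forall>f\<in>F. AE \<omega> in M. \<forall>c. (\<forall>k. fs k \<omega> \<le> c) \<longrightarrow> f \<omega> \<le> c)"
proof -
  interpret prob_space M by (rule P)
  define I where "I f = (\<integral>\<omega>. arctan (f \<omega>) \<partial>M)" for f
  have abnd: "norm (arctan y) \<le> pi/2" for y
    using arctan_bounded[of y] by auto
  have aub: "arctan y \<le> pi/2" for y using arctan_bounded[of y] by linarith
  have intI: "integrable M (\<lambda>\<omega>. arctan (f \<omega>))" if "f \<in> borel_measurable M" for f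
    using that abnd by (intro integrable_const_bound[where B="pi/2"]) auto
  have Ibd: "I f \<le> pi/2" if "f \<in> borel_measurable M" for f
  proof -
    have "I f \<le> (\<integral>\<omega>. pi/2 \<partial>M)"
      unfolding I_def using that aub
      by (intro integral_mono intI) auto
    then show ?thesis by (simp add: prob_space)
  qed
  define s where "s = (SUP f\<in>F. I f)"
  have bdd: "bdd_above (I ` F)" using Ibd Fm by (intro bdd_aboveI2[where M="pi/2"]) auto
  have sup_le: "I f \<le> s" if "f \<in> F" for f
    unfolding s_def using bdd that by (rule cSUP_upper2) auto
  have "\<exists>g\<in>F. s - 1 / real (Suc k) < I g" for k
  proof -
    have "s - 1 / real (Suc k) < s" by simp
    then show ?thesis unfolding s_def[symmetric] using less_cSUP_iff[OF Fne bdd]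
      by (simp add: s_def)
  qed
  then have "\<forall>k. \<exists>g. g \<in> F \<and> s - 1 / real (Suc k) < I g" by blast
  then have "\<exists>g. \<forall>k. g k \<in> F \<and> s - 1 / real (Suc k) < I (g k)" by (rule choice)
  then obtain g where g: "\<And>k. g k \<in> F" "\<And>k. s - 1 / real (Suc k) < I (g k)"
    by blast
  define dm where "dm f g = (SOME h. h \<in> F \<and> (AE \<omega> in M. f \<omega> \<le> h \<omega> \<and> g \<omega> \<le> h \<omega>))" for f g
  have dm: "dm f g \<in> F \<and> (AE \<omega> in M. f \<omega> \<le> dm f g \<omega> \<and> g \<omega> \<le> dm f g \<omega>)"
    if "f \<in> F" "g \<in> F" for f g
  proof -
    from dir that have "\<exists>h. h \<in> F \<and> (AE \<omega> in M. f \<omega> \<le> h \<omega> \<and> g \<omega> \<le> h \<omega>)"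
      by (simp add: Bex_def)
    then show ?thesis unfolding dm_def by (rule someI_ex)
  qed
  define fs where "fs = rec_nat (g 0) (\<lambda>k h. dm h (g (Suc k)))"
  have fs0: "fs 0 = g 0" and fsS: "fs (Suc k) = dm (fs k) (g (Suc k))" for k
    by (simp_all add: fs_def)
  have fsF: "fs k \<in> F" for k
    by (induction k) (auto simp: fs0 fsS g dm)
  have fsm[measurable]: "fs k \<in> borel_measurable M" for k using fsF Fm by auto
  have mono: "AE \<omega> in M. \<forall>k. fs k \<omega> \<le> fs (Suc k) \<omega>"
    unfolding AE_all_countable using dm[OF fsF g(1)] by (auto simp: fsS)
  have gle: "AE \<omega> in M. g k \<omega> \<le> fs k \<omega>" for k
    using dm[OF fsF g(1)] by (cases k) (auto simp: fs0 fsS)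
  have Ifs: "s - 1 / real (Suc k) < I (fs k)" for k
  proof -
    have "I (g k) \<le> I (fs k)"
      unfolding I_def using gle[of k] g(1)[of k] Fm
      by (intro integral_mono_AE intI) (auto elim!: AE_mp simp: arctan_le_iff)
    then show ?thesis using g(2)[of k] by linarith
  qed
  define L where "L \<omega> = (SUP k. arctan (fs k \<omega>))" for \<omega>
  have Lm[measurable]: "L \<in> borel_measurable M" unfolding L_def by measurable
  have bddL: "bdd_above (range (\<lambda>k. arctan (fs k \<omega>)))" for \<omega>
    using aub by (intro bdd_aboveI2[where M="pi/2"]) auto
  have Lup: "arctan (fs k \<omega>) \<le> L \<omega>" for k \<omega>
    unfolding L_def by (rule cSUP_upper[OF _ bddL]) auto
  have Lbd: "norm (L \<omega>) \<le> pi/2" for \<omega>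
  proof -
    have "L \<omega> \<le> pi/2" unfolding L_def using aub
      by (intro cSUP_least) auto
    moreover have "- (pi/2) \<le> L \<omega>" using Lup[of 0 \<omega>] abnd[of "fs 0 \<omega>"] by (auto simp: abs_le_iff)
    ultimately show ?thesis by auto
  qed
  have intL: "integrable M L" using Lbd by (intro integrable_const_bound[where B="pi/2"]) auto
  have sL: "s \<le> integral\<^sup>L M L"
  proof (rule ccontr)
    assume "\<not> ?thesis"
    then have "0 < s - integral\<^sup>L M L" by simp
    then obtain k where k: "inverse (real (Suc k)) < s - integral\<^sup>L M L"
      using reals_Archimedean by blast
    have "I (fs k) \<le> integral\<^sup>L M L" unfolding I_def
      using Lup by (intro integral_mono intI intL) auto
    moreover have "inverse (real (Suc k)) = 1 / real (Suc k)" by (simp add: inverse_eq_divide)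
    ultimately show False using Ifs[of k] k by linarith
  qed
  have main: "AE \<omega> in M. \<forall>c. (\<forall>k. fs k \<omega> \<le> c) \<longrightarrow> f \<omega> \<le> c" if fF: "f \<in> F" for f
  proof -
    have fm[measurable]: "f \<in> borel_measurable M" using fF Fm by auto
    define h where "h k = dm f (fs k)" for k
    have hF: "h k \<in> F" and hle: "AE \<omega> in M. f \<omega> \<le> h k \<omega> \<and> fs k \<omega> \<le> h k \<omega>" for k
      using dm[OF fF fsF] by (auto simp: h_def)
    have hm[measurable]: "h k \<in> borel_measurable M" for k using hF Fm by auto
    define G where "G k \<omega> = max (arctan (f \<omega>)) (arctan (fs k \<omega>))" for k \<omega>
    define G' where "G' \<omega> = max (arctan (f \<omega>)) (L \<omega>)" for \<omega>
    have Gm[measurable]: "G k \<in> borel_measurable M" for k unfolding G_def by measurable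
    have G'm[measurable]: "G' \<in> borel_measurable M" unfolding G'_def by measurable
    have Gle: "integral\<^sup>L M (G k) \<le> s" for k
    proof -
      have "integral\<^sup>L M (G k) \<le> I (h k)" unfolding I_def G_def
        using hle[of k] max_arctan_bnd2
        by (intro integral_mono_AE intI integrable_const_bound[where B="pi/2"])
           (auto elim!: AE_mp simp: arctan_le_iff)
      then show ?thesis using sup_le[OF hF[of k]] by linarith
    qed
    have conv: "(\<lambda>k. integral\<^sup>L M (G k)) \<longlonglongrightarrow> integral\<^sup>L M G'"
    proof (rule integral_dominated_convergence[where w="\<lambda>_. pi/2"])
      show "AE \<omega> in M. (\<lambda>k. G k \<omega>) \<longlonglongrightarrow> G' \<omega>"
        using mono
      proof (rule AE_mp, intro AE_I2 impI)
        fix \<omega> assume "\<forall>k. fs k \<omega> \<le> fs (Suc k) \<omega>"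
        then have "incseq (\<lambda>k. arctan (fs k \<omega>))"
          by (intro incseq_SucI) (simp add: arctan_le_iff)
        then have "(\<lambda>k. arctan (fs k \<omega>)) \<longlonglongrightarrow> L \<omega>"
          unfolding L_def using bddL by (intro LIMSEQ_incseq_SUP)
        then show "(\<lambda>k. G k \<omega>) \<longlonglongrightarrow> G' \<omega>" unfolding G_def G'_def
          by (intro tendsto_max tendsto_const)
      qed
      show "AE \<omega> in M. norm (G k \<omega>) \<le> pi/2" for k
        unfolding G_def by (intro AE_I2 max_arctan_bnd2)
    qed auto
    have "integral\<^sup>L M G' \<le> s"
      using conv Gle by (intro LIMSEQ_le_const2) auto
    have intG': "integrable M G'" using Lbd unfolding G'_def
      by (intro integrable_const_bound[where B="pi/2"] AE_I2 max_arctan_bnd) auto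
    have "integral\<^sup>L M (\<lambda>\<omega>. G' \<omega> - L \<omega>) = integral\<^sup>L M G' - integral\<^sup>L M L"
      using intG' intL by simp
    also have "\<dots> \<le> 0" using \<open>integral\<^sup>L M G' \<le> s\<close> sL by linarith
    finally have le0: "integral\<^sup>L M (\<lambda>\<omega>. G' \<omega> - L \<omega>) \<le> 0" .
    have ge0: "0 \<le> integral\<^sup>L M (\<lambda>\<omega>. G' \<omega> - L \<omega>)"
      by (intro integral_nonneg_AE) (auto simp: G'_def)
    have intD: "integrable M (\<lambda>\<omega>. G' \<omega> - L \<omega>)" using intG' intL by auto
    have nnD: "AE \<omega> in M. 0 \<le> G' \<omega> - L \<omega>" by (intro AE_I2) (auto simp: G'_def)
    have "integral\<^sup>L M (\<lambda>\<omega>. G' \<omega> - L \<omega>) = 0" using le0 ge0 by linarith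
    then have "AE \<omega> in M. G' \<omega> - L \<omega> = 0"
      using integral_nonneg_eq_0_iff_AE[OF intD nnD] by simp
    then show ?thesis
    proof (rule AE_mp, intro AE_I2 impI allI)
      fix \<omega> c assume "G' \<omega> - L \<omega> = 0" "\<forall>k. fs k \<omega> \<le> c"
      then have "arctan (f \<omega>) \<le> L \<omega>" by (simp add: G'_def)
      also have "L \<omega> \<le> arctan c" unfolding L_def
        using \<open>\<forall>k. fs k \<omega> \<le> c\<close> by (intro cSUP_least) (auto simp: arctan_le_iff)
      finally show "f \<omega> \<le> c" by (simp add: arctan_le_iff)
    qed
  qed
  show ?thesis using fsF mono main by blast
qed

lemma conv_scale:
  fixes M :: "'w measure" and c :: "'w \<Rightarrow> real"
  assumes P: "prob_space M" and cm[measurable]: "c \<in> borel_measurable M"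
    and fm[measurable]: "\<And>n. f n \<in> borel_measurable M"
    and gm[measurable]: "\<And>n. g n \<in> borel_measurable M"
    and conv: "\<forall>\<epsilon>>0. (\<lambda>n. measure M {\<omega>\<in>space M. f n \<omega> \<ge> \<epsilon>}) \<longlonglongrightarrow> 0"
    and le: "\<And>n. AE \<omega> in M. g n \<omega> \<le> c \<omega> * f n \<omega> \<and> 0 \<le> f n \<omega>"
  shows "\<forall>\<epsilon>>0. (\<lambda>n. measure M {\<omega>\<in>space M. g n \<omega> \<ge> \<epsilon>}) \<longlonglongrightarrow> 0"
proof (intro allI impI)
  interpret prob_space M by (rule P)
  fix \<epsilon> :: real assume ep: "\<epsilon> > 0"
  define A where "A K = {\<omega>\<in>space M. real (Suc K) \<le> c \<omega>}" for K
  have Am: "A K \<in> sets M" for K unfolding A_def by measurable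
  have "decseq A" unfolding A_def by (intro decseq_SucI) auto
  have "(\<Inter>K. A K) = {}"
  proof safe
    fix \<omega> assume "\<omega> \<in> (\<Inter>K. A K)"
    then have hK: "real (Suc K) \<le> c \<omega>" for K by (auto simp: A_def)
    obtain K where "c \<omega> < real K" using reals_Archimedean2 by blast
    then show "\<omega> \<in> {}" using hK[of K] by simp
  qed
  then have limA: "(\<lambda>K. measure M (A K)) \<longlonglongrightarrow> 0"
    using finite_Lim_measure_decseq[of A] Am \<open>decseq A\<close> by auto
  show "(\<lambda>n. measure M {\<omega>\<in>space M. g n \<omega> \<ge> \<epsilon>}) \<longlonglongrightarrow> 0"
  proof (rule LIMSEQ_I)
    fix r :: real assume r: "0 < r"
    obtain K where K: "measure M (A K) < r/2"
      using LIMSEQ_D[OF limA, of "r/2"] r by auto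
    define K' where "K' = real (Suc K)"
    have K'pos: "K' > 0" by (simp add: K'_def)
    define B where "B n = {\<omega>\<in>space M. f n \<omega> \<ge> \<epsilon> / K'}" for n
    have Bm: "B n \<in> sets M" for n unfolding B_def by measurable
    have "(\<lambda>n. measure M (B n)) \<longlonglongrightarrow> 0" unfolding B_def
      using conv ep K'pos by auto
    then obtain N where N: "\<And>n. n \<ge> N \<Longrightarrow> measure M (B n) < r/2"
      using LIMSEQ_D[of _ 0 "r/2"] r by fastforce
    show "\<exists>N. \<forall>n\<ge>N. norm (measure M {\<omega>\<in>space M. g n \<omega> \<ge> \<epsilon>} - 0) < r"
    proof (intro exI allI impI)
      fix n assume "n \<ge> N"
      have "measure M {\<omega>\<in>space M. g n \<omega> \<ge> \<epsilon>} \<le> measure M (A K \<union> B n)"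
      proof (rule finite_measure_mono_AE)
        show "A K \<union> B n \<in> sets M" using Am Bm by auto
        show "AE x\<in>{\<omega>\<in>space M. \<epsilon> \<le> g n \<omega>} in M. x \<in> A K \<union> B n"
          using le[of n]
        proof (rule AE_mp, intro AE_I2 impI)
          fix \<omega> assume \<omega>: "\<omega> \<in> space M" and h: "g n \<omega> \<le> c \<omega> * f n \<omega> \<and> 0 \<le> f n \<omega>"
            and g: "\<omega> \<in> {\<omega> \<in> space M. \<epsilon> \<le> g n \<omega>}"
          show "\<omega> \<in> A K \<union> B n"
          proof (rule ccontr)
            assume "\<omega> \<notin> A K \<union> B n"
            then have c1: "c \<omega> < K'" and f1: "f n \<omega> < \<epsilon> / K'"
              using \<omega> by (auto simp: A_def B_def K'_def)
            have "c \<omega> * f n \<omega> \<le> K' * f n \<omega>"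
              using c1 h by (intro mult_right_mono) auto
            also have "\<dots> < K' * (\<epsilon> / K')" using f1 K'pos by (intro mult_strict_left_mono) auto
            also have "\<dots> = \<epsilon>" using K'pos by simp
            finally show False using h g by auto
          qed
        qed
      qed
      also have "\<dots> \<le> measure M (A K) + measure M (B n)"
        using Am Bm by (intro measure_Un_le)
      also have "\<dots> < r" using K N[OF \<open>n \<ge> N\<close>] by linarith
      finally show "norm (measure M {\<omega>\<in>space M. g n \<omega> \<ge> \<epsilon>} - 0) < r" by simp
    qed
  qed
qed

definition ind :: "'w set \<Rightarrow> 'w \<Rightarrow> 'k::real_normed_field" where
  "ind E = (\<lambda>\<omega>. if \<omega> \<in> E then 1 else 0)"

context rnm
begin

lemma ind_eq_indicator: "ind E = indicator E"
  by (auto simp: ind_def indicator_def)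

lemma ind_L0: "E \<in> sets M \<Longrightarrow> ind E \<in> L0 M"
  unfolding L0_def ind_eq_indicator by simp

lemma ofreal_L0: "f \<in> borel_measurable M \<Longrightarrow> (\<lambda>\<omega>. of_real (f \<omega>) :: 'k) \<in> L0 M"
  unfolding L0_def by measurable

lemma conv_mult:
  assumes c: "c \<in> L0 M" and cv: "eps_lambda_conv M nrm xs x"
  shows "eps_lambda_conv M nrm (\<lambda>n. sm c (xs n)) (sm c x)"
  unfolding eps_lambda_conv_def
proof (rule conv_scale[OF prob, where c="\<lambda>\<omega>. norm (c \<omega>)" and f="\<lambda>n. nrm (xs n - x)"])
  show "(\<lambda>\<omega>. norm (c \<omega>)) \<in> borel_measurable M" using c unfolding L0_def by measurable
  show "\<forall>\<epsilon>>0. (\<lambda>n. measure M {\<omega> \<in> space M. \<epsilon> \<le> nrm (xs n - x) \<omega>}) \<longlonglongrightarrow> 0"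
    using cv unfolding eps_lambda_conv_def by simp
  fix n
  have "sm c (xs n) - sm c x = sm c (xs n - x)" using c by (simp add: sm_diff_vec)
  then show "AE \<omega> in M. nrm (sm c (xs n) - sm c x) \<omega> \<le> norm (c \<omega>) * nrm (xs n - x) \<omega> \<and> 0 \<le> nrm (xs n - x) \<omega>"
    using nrm_sm[OF c, of "xs n - x"] nrm_nonneg[of "xs n - x"] by auto
qed (intro nrm_meas)+

lemma in_BS_scal: "c \<in> L0 M \<Longrightarrow> in_BS M sm nrm (sm c)"
  unfolding in_BS_def is_module_hom_def
proof (intro conjI ballI allI impI)
  assume c: "c \<in> L0 M"
  fix x y show "sm c (x + y) = sm c x + sm c y" using c by (rule sm_add_vec)
next
  assume c: "c \<in> L0 M"
  fix \<xi> :: "'w \<Rightarrow> 'k" and x assume "\<xi> \<in> L0 M"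
  then show "sm c (sm \<xi> x) = sm \<xi> (sm c x)" using c by (intro sm_comm)
next
  assume c: "c \<in> L0 M"
  fix xs x assume "eps_lambda_conv M nrm xs x"
  then show "eps_lambda_conv M nrm (\<lambda>n. sm c (xs n)) (sm c x)" using c by (intro conv_mult)
qed

lemma in_BS_comp: "in_BS M sm nrm T1 \<Longrightarrow> in_BS M sm nrm T2 \<Longrightarrow> in_BS M sm nrm (\<lambda>x. T1 (T2 x))"
  unfolding in_BS_def is_module_hom_def by auto

lemma in_BS_id: "in_BS M sm nrm (\<lambda>x. x)"
  unfolding in_BS_def is_module_hom_def by auto

lemma in_BS_pow: "in_BS M sm nrm T \<Longrightarrow> in_BS M sm nrm (T ^^ n)"
proof (induction n)
  case 0 then show ?case using in_BS_id by (simp add: id_def)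
next
  case (Suc n)
  then have "in_BS M sm nrm (T ^^ n)" by simp
  then have "in_BS M sm nrm (\<lambda>x. T ((T ^^ n) x))" using in_BS_comp[OF Suc.prems] by blast
  then show ?case by (simp add: comp_def)
qed

lemma ind_mult_same: "(\<lambda>\<omega>. ind E \<omega> * ind E \<omega>) = (ind E :: 'w \<Rightarrow> 'k)"
  by (auto simp: ind_def)
lemma ind_mult_compl: "(\<lambda>\<omega>. ind E \<omega> * ind (space M - E) \<omega>) = (\<lambda>\<omega>. 0 :: 'k)"
  by (auto simp: ind_def)
lemma ind_mult_compl': "(\<lambda>\<omega>. ind (space M - E) \<omega> * ind E \<omega>) = (\<lambda>\<omega>. 0 :: 'k)"
  by (auto simp: ind_def)

lemma paste_nrm:
  assumes E: "E \<in> sets M"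
  shows "AE \<omega> in M. nrm (sm (ind E) a + sm (ind (space M - E)) b) \<omega> =
           (if \<omega> \<in> E then nrm a \<omega> else nrm b \<omega>)"
proof -
  let ?w = "sm (ind E) a + sm (ind (space M - E)) b"
  have E1: "ind E \<in> L0 M" using E by (rule ind_L0)
  have E2: "ind (space M - E) \<in> L0 M" using E by (intro ind_L0) auto
  have s1: "sm (ind E) ?w = sm (ind E) a"
    using E1 E2 sm_mult[OF E1 E1, of a, symmetric] sm_mult[OF E1 E2, of b, symmetric]
    by (subst sm_add_vec[OF E1]) (simp add: ind_mult_same ind_mult_compl sm_zero_sc)
  have s2: "sm (ind (space M - E)) ?w = sm (ind (space M - E)) b"
    using E1 E2 sm_mult[OF E2 E2, of b, symmetric] sm_mult[OF E2 E1, of a, symmetric]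
    by (subst sm_add_vec[OF E2]) (simp add: ind_mult_same ind_mult_compl' sm_zero_sc)
  have "AE \<omega> in M. nrm (sm (ind E) ?w) \<omega> = norm (ind E \<omega> :: 'k) * nrm ?w \<omega>"
    by (rule nrm_sm[OF E1])
  moreover have "AE \<omega> in M. nrm (sm (ind E) a) \<omega> = norm (ind E \<omega> :: 'k) * nrm a \<omega>"
    by (rule nrm_sm[OF E1])
  moreover have "AE \<omega> in M. nrm (sm (ind (space M - E)) ?w) \<omega> = norm (ind (space M - E) \<omega> :: 'k) * nrm ?w \<omega>"
    by (rule nrm_sm[OF E2])
  moreover have "AE \<omega> in M. nrm (sm (ind (space M - E)) b) \<omega> = norm (ind (space M - E) \<omega> :: 'k) * nrm b \<omega>"
    by (rule nrm_sm[OF E2])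
  moreover note AE_space
  ultimately show ?thesis unfolding s1 s2
  proof eventually_elim
    case (elim \<omega>)
    show ?case
    proof (cases "\<omega> \<in> E")
      case True
      then have "ind E \<omega> = (1::'k)" "ind (space M - E) \<omega> = (0::'k)" by (auto simp: ind_def)
      then show ?thesis using elim True by simp
    next
      case False
      then have "ind E \<omega> = (0::'k)" "ind (space M - E) \<omega> = (1::'k)" using elim by (auto simp: ind_def)
      then show ?thesis using elim False by simp
    qed
  qed
qed

end

context rnm
begin

lemma guo:
  assumes T: "in_BS M sm nrm T"
  shows "\<exists>\<zeta>\<in>L0_plus M. \<forall>x. AE \<omega> in M. nrm (T x) \<omega> \<le> \<zeta> \<omega> * nrm x \<omega>"
proof -
  interpret P: prob_space M by (rule prob)
  have hom: "is_module_hom M sm UNIV T" using T by (simp add: in_BS_def)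
  have cont: "\<And>xs x. eps_lambda_conv M nrm xs x \<Longrightarrow> eps_lambda_conv M nrm (\<lambda>n. T (xs n)) (T x)"
    using T by (simp add: in_BS_def)
  define F where "F = {nrm (T x) | x. AE \<omega> in M. nrm x \<omega> \<le> 1}"
  have Fm: "F \<subseteq> borel_measurable M" by (auto simp: F_def)
  have "AE \<omega> in M. nrm 0 \<omega> \<le> 1" using nrm_zero by eventually_elim simp
  then have Fne: "F \<noteq> {}" unfolding F_def by blast
  have dir: "\<forall>f\<in>F. \<forall>g\<in>F. \<exists>h\<in>F. AE \<omega> in M. f \<omega> \<le> h \<omega> \<and> g \<omega> \<le> h \<omega>"
  proof (intro ballI)
    fix f g assume "f \<in> F" "g \<in> F"
    then obtain x1 x2 where f: "f = nrm (T x1)" and x1: "AE \<omega> in M. nrm x1 \<omega> \<le> 1"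
      and g: "g = nrm (T x2)" and x2: "AE \<omega> in M. nrm x2 \<omega> \<le> 1"
      by (auto simp: F_def)
    define E where "E = {\<omega>\<in>space M. nrm (T x2) \<omega> \<le> nrm (T x1) \<omega>}"
    have Em: "E \<in> sets M" unfolding E_def by measurable
    have Em2: "space M - E \<in> sets M" using Em by auto
    define z where "z = sm (ind E) x1 + sm (ind (space M - E)) x2"
    have Tz: "T z = sm (ind E) (T x1) + sm (ind (space M - E)) (T x2)"
      by (simp add: z_def hom_add[OF hom] hom_sm[OF hom ind_L0[OF Em]] hom_sm[OF hom ind_L0[OF Em2]])
    have "AE \<omega> in M. nrm z \<omega> \<le> 1"
      using paste_nrm[OF Em, of x1 x2] x1 x2 unfolding z_def by eventually_elim auto
    moreover have "AE \<omega> in M. f \<omega> \<le> nrm (T z) \<omega> \<and> g \<omega> \<le> nrm (T z) \<omega>"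
      using paste_nrm[OF Em, of "T x1" "T x2"] AE_space unfolding Tz f g
      by eventually_elim (auto simp: E_def)
    ultimately show "\<exists>h\<in>F. AE \<omega> in M. f \<omega> \<le> h \<omega> \<and> g \<omega> \<le> h \<omega>"
      unfolding F_def by blast
  qed
  obtain fs where fsF: "\<forall>k. fs k \<in> F" and mono: "AE \<omega> in M. \<forall>k. fs k \<omega> \<le> fs (Suc k) \<omega>"
    and sup: "\<forall>f\<in>F. AE \<omega> in M. \<forall>c. (\<forall>k. fs k \<omega> \<le> c) \<longrightarrow> f \<omega> \<le> c"
    using directed_esssup[OF prob Fm Fne dir] by blast
  have "\<forall>k. \<exists>x. fs k = nrm (T x) \<and> (AE \<omega> in M. nrm x \<omega> \<le> 1)" using fsF by (auto simp: F_def)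
  then have "\<exists>xs. \<forall>k. fs k = nrm (T (xs k)) \<and> (AE \<omega> in M. nrm (xs k) \<omega> \<le> 1)" by (rule choice)
  then obtain xs where xs1: "\<And>k. fs k = nrm (T (xs k))" and xs2: "\<And>k. AE \<omega> in M. nrm (xs k) \<omega> \<le> 1"
    by blast
  have fsm[measurable]: "fs k \<in> borel_measurable M" for k using fsF Fm by auto
  have mono2: "AE \<omega> in M. \<forall>i j. i \<le> j \<longrightarrow> fs i \<omega> \<le> fs j \<omega>"
    using mono
  proof eventually_elim
    case (elim \<omega>)
    then have "incseq (\<lambda>k. fs k \<omega>)" by (intro incseq_SucI) auto
    then show ?case by (auto dest: incseqD)
  qed
  define U where "U = {\<omega>\<in>space M. \<forall>m::nat. \<exists>k. real m < fs k \<omega>}"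
  have Um: "U \<in> sets M" unfolding U_def by measurable
  have bdd: "AE \<omega> in M. bdd_above (range (\<lambda>k. fs k \<omega>))"
  proof -
    have "measure M U = 0"
    proof (rule ccontr)
      assume "measure M U \<noteq> 0"
      define p where "p = measure M U"
      have p: "0 < p" using \<open>measure M U \<noteq> 0\<close> measure_nonneg[of M U] unfolding p_def by linarith
      have "\<exists>j. p/2 < measure M {\<omega>\<in>space M. real m < fs j \<omega>}" for m
      proof -
        define V where "V j = {\<omega>\<in>space M. \<exists>i\<le>j. real m < fs i \<omega>}" for j
        have Vm1: "V j \<in> sets M" for j unfolding V_def by measurable
        then have Vm: "range V \<subseteq> sets M" by auto
        have "incseq V" unfolding V_def incseq_def by (auto intro: order_trans)
        have lim: "(\<lambda>j. measure M (V j)) \<longlonglongrightarrow> measure M (\<Union>j. V j)"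
          using P.finite_Lim_measure_incseq[OF Vm \<open>incseq V\<close>] .
        have "U \<subseteq> (\<Union>j. V j)" unfolding U_def V_def by blast
        then have "p \<le> measure M (\<Union>j. V j)" unfolding p_def using Vm1
          by (intro P.finite_measure_mono) auto
        then have "p/2 < measure M (\<Union>j. V j)" using p by linarith
        then have "eventually (\<lambda>j. p/2 < measure M (V j)) sequentially"
          by (rule order_tendstoD(1)[OF lim])
        then obtain j where j: "p/2 < measure M (V j)" by (auto simp: eventually_sequentially)
        have "measure M (V j) \<le> measure M {\<omega>\<in>space M. real m < fs j \<omega>}"
        proof (rule P.finite_measure_mono_AE)
          show "AE x\<in>V j in M. x \<in> {\<omega>\<in>space M. real m < fs j \<omega>}"
            using mono2 by eventually_elim (auto simp: V_def intro: less_le_trans)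
          show "{\<omega>\<in>space M. real m < fs j \<omega>} \<in> sets M" by measurable
        qed
        then have "p/2 < measure M {\<omega>\<in>space M. real m < fs j \<omega>}" using j by linarith
        then show ?thesis by blast
      qed
      then have "\<forall>m. \<exists>j. p/2 < measure M {\<omega>\<in>space M. real m < fs j \<omega>}" by blast
      then have "\<exists>J. \<forall>m. p/2 < measure M {\<omega>\<in>space M. real m < fs (J m) \<omega>}" by (rule choice)
      then obtain J where J: "\<And>m. p/2 < measure M {\<omega>\<in>space M. real m < fs (J m) \<omega>}" by blast
      define c where "c m = (\<lambda>\<omega>::'w. of_real (1 / real (Suc m)) :: 'k)" for m
      have cL0: "c m \<in> L0 M" for m by (simp add: c_def)
      have nc: "norm (c m \<omega>) = 1 / real (Suc m)" for m \<omega>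
        unfolding c_def norm_of_real by simp
      define y where "y m = sm (c m) (xs (J (Suc m)))" for m
      have y0: "eps_lambda_conv M nrm y 0"
        unfolding eps_lambda_conv_def
      proof (intro allI impI)
        fix \<epsilon> :: real assume "\<epsilon> > 0"
        then obtain N where N: "inverse (real (Suc N)) < \<epsilon>" using reals_Archimedean by blast
        show "(\<lambda>n. measure M {\<omega> \<in> space M. \<epsilon> \<le> nrm (y n - 0) \<omega>}) \<longlonglongrightarrow> 0"
        proof (rule tendsto_eventually, unfold eventually_sequentially, intro exI allI impI)
          fix n assume "N \<le> n"
          then have le: "1 / real (Suc n) \<le> 1 / real (Suc N)"
            by (intro divide_left_mono) auto
          have "AE \<omega> in M. \<omega> \<notin> {\<omega> \<in> space M. \<epsilon> \<le> nrm (y n - 0) \<omega>}"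
            using nrm_sm[OF cL0, of n "xs (J (Suc n))"] xs2[of "J (Suc n)"]
          proof eventually_elim
            case (elim \<omega>)
            have "nrm (y n) \<omega> = 1 / real (Suc n) * nrm (xs (J (Suc n))) \<omega>"
              using elim by (simp only: y_def nc)
            also have "\<dots> \<le> 1 / real (Suc n)"
              using elim by (intro mult_left_le) auto
            also have "\<dots> < \<epsilon>" using le N by (simp add: inverse_eq_divide)
            finally show ?case by auto
          qed
          moreover have "{\<omega> \<in> space M. \<epsilon> \<le> nrm (y n - 0) \<omega>} \<in> sets M" by measurable
          ultimately show "measure M {\<omega> \<in> space M. \<epsilon> \<le> nrm (y n - 0) \<omega>} = 0"
            using P.prob_eq_0 by blast
        qed
      qed
      have "eps_lambda_conv M nrm (\<lambda>n. T (y n)) (T 0)" using cont[OF y0] .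
      then have lim1: "(\<lambda>n. measure M {\<omega>\<in>space M. 1 \<le> nrm (T (y n)) \<omega>}) \<longlonglongrightarrow> 0"
        unfolding eps_lambda_conv_def by (simp add: hom_zero[OF hom])
      have ge: "p/2 < measure M {\<omega>\<in>space M. 1 \<le> nrm (T (y n)) \<omega>}" for n
      proof -
        have Ty: "T (y n) = sm (c n) (T (xs (J (Suc n))))" unfolding y_def using hom cL0
          by (simp add: hom_sm[OF hom])
        have "measure M {\<omega>\<in>space M. real (Suc n) < fs (J (Suc n)) \<omega>}
              \<le> measure M {\<omega>\<in>space M. 1 \<le> nrm (T (y n)) \<omega>}"
        proof (rule P.finite_measure_mono_AE)
          show "AE x\<in>{\<omega>\<in>space M. real (Suc n) < fs (J (Suc n)) \<omega>} in M.
                  x \<in> {\<omega>\<in>space M. 1 \<le> nrm (T (y n)) \<omega>}"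
            using nrm_sm[OF cL0, of n "T (xs (J (Suc n)))"] unfolding Ty[symmetric]
          proof (rule AE_mp, intro AE_I2 impI)
            fix \<omega> assume sp: "\<omega> \<in> space M"
              and eq: "nrm (T (y n)) \<omega> = norm (c n \<omega>) * nrm (T (xs (J (Suc n)))) \<omega>"
              and inA: "\<omega> \<in> {\<omega>\<in>space M. real (Suc n) < fs (J (Suc n)) \<omega>}"
            then have lt: "real (Suc n) < nrm (T (xs (J (Suc n)))) \<omega>" by (simp add: xs1)
            have "1 = (1/real (Suc n)) * real (Suc n)" by simp
            also have "\<dots> \<le> (1/real (Suc n)) * nrm (T (xs (J (Suc n)))) \<omega>"
              using lt by (intro mult_left_mono) auto
            also have "\<dots> = nrm (T (y n)) \<omega>" using eq by (simp only: nc)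
            finally show "\<omega> \<in> {\<omega>\<in>space M. 1 \<le> nrm (T (y n)) \<omega>}" using sp by simp
          qed
          show "{\<omega>\<in>space M. 1 \<le> nrm (T (y n)) \<omega>} \<in> sets M" by measurable
        qed
        then show ?thesis using J[of "Suc n"] by linarith
      qed
      from LIMSEQ_D[OF lim1, of "p/2"] p obtain N
        where "\<And>n. n \<ge> N \<Longrightarrow> norm (measure M {\<omega>\<in>space M. 1 \<le> nrm (T (y n)) \<omega>} - 0) < p/2"
        by auto
      then have "norm (measure M {\<omega>\<in>space M. 1 \<le> nrm (T (y N)) \<omega>} - 0) < p/2" by simp
      then show False using ge[of N] by simp
    qed
    then have "AE \<omega> in M. \<omega> \<notin> U" using P.prob_eq_0[OF Um] by simp
    then show ?thesis
    proof (rule AE_mp, intro AE_I2 impI)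
      fix \<omega> assume "\<omega> \<in> space M" "\<omega> \<notin> U"
      then obtain m :: nat where "\<forall>k. fs k \<omega> \<le> real m" unfolding U_def by (auto simp: not_less)
      then show "bdd_above (range (\<lambda>k. fs k \<omega>))" by (intro bdd_aboveI2) auto
    qed
  qed
  define \<zeta> where "\<zeta> \<omega> = (SUP k. fs k \<omega>)" for \<omega>
  have \<zeta>m[measurable]: "\<zeta> \<in> borel_measurable M" unfolding \<zeta>_def by measurable
  have fs_le: "AE \<omega> in M. \<forall>k. fs k \<omega> \<le> \<zeta> \<omega>"
    using bdd by eventually_elim (auto simp: \<zeta>_def intro: cSUP_upper)
  have \<zeta>nn: "AE \<omega> in M. 0 \<le> \<zeta> \<omega>"
    using fs_le nrm_nonneg[of "T (xs 0)"] unfolding xs1[symmetric]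
    by eventually_elim (metis order_trans)
  have Fle: "AE \<omega> in M. f \<omega> \<le> \<zeta> \<omega>" if "f \<in> F" for f
    using bspec[OF sup that] fs_le by eventually_elim blast
  have \<zeta>L: "\<zeta> \<in> L0_plus M" unfolding L0_plus_def using \<zeta>nn by simp
  show ?thesis
  proof (intro bexI[OF _ \<zeta>L] allI)
    fix x
    define E where "E = {\<omega>\<in>space M. 0 < nrm x \<omega>}"
    have Em: "E \<in> sets M" unfolding E_def by measurable
    define d where "d \<omega> = (if \<omega> \<in> E then 1 / nrm x \<omega> else 0)" for \<omega>
    have dm: "d \<in> borel_measurable M" unfolding d_def E_def by measurable
    define dk where "dk = (\<lambda>\<omega>. of_real (d \<omega>) :: 'k)"
    have dkL: "dk \<in> L0 M" unfolding dk_def using dm by (rule ofreal_L0)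
    define u where "u = sm dk x"
    have "AE \<omega> in M. nrm u \<omega> \<le> 1"
      using nrm_sm[OF dkL, of x] by eventually_elim (auto simp: u_def dk_def d_def E_def)
    then have "nrm (T u) \<in> F" unfolding F_def by blast
    then have A1: "AE \<omega> in M. nrm (T u) \<omega> \<le> \<zeta> \<omega>" by (rule Fle)
    have Tu: "T u = sm dk (T x)" unfolding u_def using hom dkL by (simp add: hom_sm[OF hom])
    have A2: "AE \<omega> in M. nrm (T u) \<omega> = norm (dk \<omega>) * nrm (T x) \<omega>"
      unfolding Tu by (rule nrm_sm[OF dkL])
    have Ec: "space M - E \<in> sets M" using Em by auto
    have iL: "ind (space M - E) \<in> L0 M" using Ec by (rule ind_L0)
    have "AE \<omega> in M. nrm (sm (ind (space M - E)) x) \<omega> = 0"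
      using nrm_sm[OF iL, of x] nrm_nonneg[of x]
      by eventually_elim (auto simp: ind_def E_def)
    then have v0: "sm (ind (space M - E)) x = 0" by (rule nrm_eq0)
    have eq0: "sm (ind (space M - E)) (T x) = 0"
      using hom_sm[OF hom iL, of x] v0 hom_zero[OF hom] by simp
    have A3: "AE \<omega> in M. norm (ind (space M - E) \<omega> :: 'k) * nrm (T x) \<omega> = 0"
      using nrm_sm[OF iL, of "T x"] nrm_zero unfolding eq0 by eventually_elim simp
    show "AE \<omega> in M. nrm (T x) \<omega> \<le> \<zeta> \<omega> * nrm x \<omega>"
      using A1 A2 A3 \<zeta>nn nrm_nonneg[of x] AE_space
    proof eventually_elim
      case (elim \<omega>)
      show ?case
      proof (cases "\<omega> \<in> E")
        case True
        then have nx: "0 < nrm x \<omega>" by (simp add: E_def)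
        have "norm (dk \<omega>) = \<bar>d \<omega>\<bar>" unfolding dk_def by (rule norm_of_real)
        also have "\<dots> = 1 / nrm x \<omega>" using True nx by (simp add: d_def)
        finally have "norm (dk \<omega>) = 1 / nrm x \<omega>" .
        then have "nrm (T x) \<omega> / nrm x \<omega> \<le> \<zeta> \<omega>" using elim by simp
        then show ?thesis using nx by (simp add: divide_le_eq)
      next
        case False
        then have "nrm (T x) \<omega> = 0" using elim by (simp add: ind_def)
        then show ?thesis using elim by simp
      qed
    qed
  qed
qed

end

context rnm
begin

lemma opnorm_bound:
  assumes T: "in_BS M sm nrm T"
  shows "AE \<omega> in M. nrm (T x) \<omega> \<le> L0_opnorm M nrm T \<omega> * nrm x \<omega>"
proof -
  define Z where "Z = {\<zeta> \<in> L0_plus M. \<forall>x. AE \<omega> in M. nrm (T x) \<omega> \<le> \<zeta> \<omega> * nrm x \<omega>}"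
  obtain \<zeta>0 where \<zeta>0: "\<zeta>0 \<in> Z" using guo[OF T] unfolding Z_def by blast
  have Zm: "\<zeta> \<in> borel_measurable M" "AE \<omega> in M. 0 \<le> \<zeta> \<omega>"
    "\<And>x. AE \<omega> in M. nrm (T x) \<omega> \<le> \<zeta> \<omega> * nrm x \<omega>" if "\<zeta> \<in> Z" for \<zeta>
    using that by (auto simp: Z_def L0_plus_def)
  define F where "F = (\<lambda>\<zeta> \<omega>. - \<zeta> \<omega>) ` Z"
  have Fm: "F \<subseteq> borel_measurable M" using Zm(1) by (auto simp: F_def)
  have Fne: "F \<noteq> {}" using \<zeta>0 by (auto simp: F_def)
  have minZ: "(\<lambda>\<omega>. min (\<zeta>1 \<omega>) (\<zeta>2 \<omega>)) \<in> Z" if a: "\<zeta>1 \<in> Z" "\<zeta>2 \<in> Z" for \<zeta>1 \<zeta>2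
  proof -
    have [measurable]: "\<zeta>1 \<in> borel_measurable M" "\<zeta>2 \<in> borel_measurable M" using Zm(1) a by auto
    have m: "(\<lambda>\<omega>. min (\<zeta>1 \<omega>) (\<zeta>2 \<omega>)) \<in> borel_measurable M" by measurable
    have nn: "AE \<omega> in M. 0 \<le> min (\<zeta>1 \<omega>) (\<zeta>2 \<omega>)"
      using Zm(2)[OF a(1)] Zm(2)[OF a(2)] by eventually_elim simp
    have b: "AE \<omega> in M. nrm (T x) \<omega> \<le> min (\<zeta>1 \<omega>) (\<zeta>2 \<omega>) * nrm x \<omega>" for x
      using Zm(3)[OF a(1), of x] Zm(3)[OF a(2), of x] nrm_nonneg[of x]
      by eventually_elim (auto simp: min_def)
    show ?thesis unfolding Z_def L0_plus_def using m nn b by auto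
  qed
  have dir: "\<forall>f\<in>F. \<forall>g\<in>F. \<exists>h\<in>F. AE \<omega> in M. f \<omega> \<le> h \<omega> \<and> g \<omega> \<le> h \<omega>"
  proof (intro ballI)
    fix f g assume "f \<in> F" "g \<in> F"
    then obtain \<zeta>1 \<zeta>2 where z: "\<zeta>1 \<in> Z" "\<zeta>2 \<in> Z" and fg: "f = (\<lambda>\<omega>. - \<zeta>1 \<omega>)" "g = (\<lambda>\<omega>. - \<zeta>2 \<omega>)"
      by (auto simp: F_def)
    have hF: "(\<lambda>\<omega>. - min (\<zeta>1 \<omega>) (\<zeta>2 \<omega>)) \<in> F"
      unfolding F_def by (rule image_eqI[OF _ minZ[OF z]]) simp
    have hAE: "AE \<omega> in M. f \<omega> \<le> - min (\<zeta>1 \<omega>) (\<zeta>2 \<omega>) \<and> g \<omega> \<le> - min (\<zeta>1 \<omega>) (\<zeta>2 \<omega>)"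
      unfolding fg by simp
    show "\<exists>h\<in>F. AE \<omega> in M. f \<omega> \<le> h \<omega> \<and> g \<omega> \<le> h \<omega>" using hAE hF by (rule bexI)
  qed
  obtain fs where fsall: "(\<forall>k. fs k \<in> F) \<and> (AE \<omega> in M. \<forall>k. fs k \<omega> \<le> fs (Suc k) \<omega>) \<and>
        (\<forall>f\<in>F. AE \<omega> in M. \<forall>c. (\<forall>k. fs k \<omega> \<le> c) \<longrightarrow> f \<omega> \<le> c)"
    using directed_esssup[OF prob Fm Fne dir] by (rule exE)
  have fsF: "\<forall>k. fs k \<in> F" using fsall by (rule conjunct1)
  have sup: "\<forall>f\<in>F. AE \<omega> in M. \<forall>c. (\<forall>k. fs k \<omega> \<le> c) \<longrightarrow> f \<omega> \<le> c"
    by (rule conjunct2[OF conjunct2[OF fsall]])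
  have "\<forall>k. \<exists>\<zeta>. \<zeta> \<in> Z \<and> fs k = (\<lambda>\<omega>. - \<zeta> \<omega>)" using fsF by (auto simp: F_def)
  then have "\<exists>zs. \<forall>k. zs k \<in> Z \<and> fs k = (\<lambda>\<omega>. - zs k \<omega>)" by (rule choice)
  then obtain zs where zsZ: "\<And>k. zs k \<in> Z" and fsz: "\<And>k. fs k = (\<lambda>\<omega>. - zs k \<omega>)" by blast
  have zsm[measurable]: "zs k \<in> borel_measurable M" for k using Zm(1)[OF zsZ] .
  define g where "g \<omega> = (INF k. max 0 (zs k \<omega>))" for \<omega>
  have gm: "g \<in> borel_measurable M" unfolding g_def by measurable
  have bddb: "bdd_below (range (\<lambda>k. max 0 (zs k \<omega>)))" for \<omega>
    by (intro bdd_belowI2[where m=0]) auto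
  have zsnn: "AE \<omega> in M. \<forall>k. 0 \<le> zs k \<omega>"
    unfolding AE_all_countable using Zm(2)[OF zsZ] by blast
  have inf: "is_L0_inf M Z g"
    unfolding is_L0_inf_def
  proof (intro conjI ballI impI)
    show "g \<in> borel_measurable M" by (rule gm)
  next
    fix \<zeta> assume "\<zeta> \<in> Z"
    then have mF: "(\<lambda>\<omega>. - \<zeta> \<omega>) \<in> F" by (auto simp: F_def)
    have "AE \<omega> in M. \<forall>c. (\<forall>k. fs k \<omega> \<le> c) \<longrightarrow> - \<zeta> \<omega> \<le> c" using bspec[OF sup mF] by simp
    then show "AE \<omega> in M. g \<omega> \<le> \<zeta> \<omega>" using zsnn
    proof eventually_elim
      case (elim \<omega>)
      have "g \<omega> \<le> zs k \<omega>" for k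
      proof -
        have "g \<omega> \<le> max 0 (zs k \<omega>)" unfolding g_def by (rule cINF_lower[OF bddb]) simp
        then show ?thesis using elim by simp
      qed
      then have "\<forall>k. fs k \<omega> \<le> - g \<omega>" by (simp add: fsz)
      then show ?case using elim by force
    qed
  next
    fix h :: "'w \<Rightarrow> real" assume "h \<in> borel_measurable M" "\<forall>\<zeta>\<in>Z. AE \<omega> in M. h \<omega> \<le> \<zeta> \<omega>"
    then have "AE \<omega> in M. \<forall>k. h \<omega> \<le> zs k \<omega>" unfolding AE_all_countable using zsZ by blast
    then show "AE \<omega> in M. h \<omega> \<le> g \<omega>"
      by eventually_elim (auto simp: g_def le_max_iff_disj intro!: cINF_greatest)
  qed
  have op: "is_L0_inf M Z (L0_opnorm M nrm T)"
    unfolding L0_opnorm_def Z_def[symmetric] using inf by (rule someI[of "is_L0_inf M Z"])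
  define G where "G = L0_opnorm M nrm T"
  have opG: "is_L0_inf M Z G" using op by (simp add: G_def)
  define h where "h \<omega> = (if 0 < nrm x \<omega> then nrm (T x) \<omega> / nrm x \<omega> else 0)" for \<omega>
  have hm: "h \<in> borel_measurable M" unfolding h_def by measurable
  have "\<forall>\<zeta>\<in>Z. AE \<omega> in M. h \<omega> \<le> \<zeta> \<omega>"
  proof
    fix \<zeta> assume z: "\<zeta> \<in> Z"
    show "AE \<omega> in M. h \<omega> \<le> \<zeta> \<omega>" using Zm(2)[OF z] Zm(3)[OF z, of x]
      by eventually_elim (auto simp: h_def divide_le_eq mult.commute)
  qed
  then have hG: "AE \<omega> in M. h \<omega> \<le> G \<omega>" using opG hm unfolding is_L0_inf_def by blast
  show ?thesis unfolding G_def[symmetric] using hG Zm(3)[OF \<zeta>0, of x] nrm_nonneg[of x]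
  proof eventually_elim
    case (elim \<omega>)
    show ?case
    proof (cases "0 < nrm x \<omega>")
      case True
      then show ?thesis using elim by (auto simp: h_def divide_le_eq mult.commute)
    next
      case False
      then have "nrm x \<omega> = 0" using elim by simp
      then show ?thesis using elim by simp
    qed
  qed
qed

end

locale hy = rnm M sm nrm
  for M :: "'w measure" and sm :: "('w \<Rightarrow> 'k::real_normed_field) \<Rightarrow> 's::ab_group_add \<Rightarrow> 's"
    and nrm :: "'s \<Rightarrow> 'w \<Rightarrow> real" +
  fixes D :: "'s set" and A :: "'s \<Rightarrow> 's" and Mb :: "'w \<Rightarrow> real"
  assumes D_sub: "is_submodule M sm D"
    and A_hom: "is_module_hom M sm D A"
    and rho: "\<forall>\<xi>\<in>L0_pp M. (\<lambda>\<omega>. of_real (\<xi> \<omega>)) \<in> resolvent_set M sm nrm D A"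
    and Mb_L0: "Mb \<in> L0_plus M"
    and Mb_ge1: "AE \<omega> in M. Mb \<omega> \<ge> 1"
    and bound: "\<forall>n\<ge>1. \<forall>\<xi>\<in>L0_pp M. AE \<omega> in M.
       L0_opnorm M nrm (\<lambda>x. sm (\<lambda>\<omega>. of_real (\<xi> \<omega> ^ n))
                                  ((resolvent sm D A (\<lambda>\<omega>. of_real (\<xi> \<omega>)) ^^ n) x)) \<omega>
       \<le> Mb \<omega>"
begin

abbreviation K :: "('w \<Rightarrow> real) \<Rightarrow> 'w \<Rightarrow> 'k" where "K a \<equiv> (\<lambda>\<omega>. of_real (a \<omega>))"
abbreviation R :: "('w \<Rightarrow> real) \<Rightarrow> 's \<Rightarrow> 's" where "R \<mu> \<equiv> resolvent sm D A (K \<mu>)"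

lemma K_L0: "a \<in> borel_measurable M \<Longrightarrow> K a \<in> L0 M"
  by (rule ofreal_L0)

lemma pp_meas: "\<mu> \<in> L0_pp M \<Longrightarrow> \<mu> \<in> borel_measurable M"
  by (simp add: L0_pp_def)
lemma pp_pos: "\<mu> \<in> L0_pp M \<Longrightarrow> AE \<omega> in M. 0 < \<mu> \<omega>"
  by (simp add: L0_pp_def)

lemma sm_KK: "a \<in> borel_measurable M \<Longrightarrow> b \<in> borel_measurable M \<Longrightarrow>
    sm (K a) (sm (K b) x) = sm (K (\<lambda>\<omega>. a \<omega> * b \<omega>)) x"
  using sm_mult[OF K_L0 K_L0, of a b x] by (simp add: of_real_mult)

lemma sm_K_add: "a \<in> borel_measurable M \<Longrightarrow> b \<in> borel_measurable M \<Longrightarrow>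
    sm (K a) x + sm (K b) x = sm (K (\<lambda>\<omega>. a \<omega> + b \<omega>)) x"
  using sm_add_sc[OF K_L0 K_L0, of a b x] by (simp add: of_real_add)

lemma sm_K_cong: "a \<in> borel_measurable M \<Longrightarrow> b \<in> borel_measurable M \<Longrightarrow>
    (AE \<omega> in M. a \<omega> = b \<omega>) \<Longrightarrow> sm (K a) x = sm (K b) x"
  by (rule sm_cong[OF K_L0 K_L0]) auto

lemma K_one: "sm (K (\<lambda>\<omega>. 1)) x = x"
  using sm_one[of x] by simp

lemma D_sm: "\<xi> \<in> L0 M \<Longrightarrow> x \<in> D \<Longrightarrow> sm \<xi> x \<in> D"
  using D_sub unfolding is_submodule_def by blast
lemma A_add: "x \<in> D \<Longrightarrow> y \<in> D \<Longrightarrow> A (x + y) = A x + A y"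
  using A_hom unfolding is_module_hom_def by blast
lemma A_sm: "\<xi> \<in> L0 M \<Longrightarrow> x \<in> D \<Longrightarrow> A (sm \<xi> x) = sm \<xi> (A x)"
  using A_hom unfolding is_module_hom_def by blast

lemma res_set:
  assumes "\<mu> \<in> L0_pp M"
  shows "bij_betw (shifted_op sm (K \<mu>) A) D UNIV" "in_BS M sm nrm (R \<mu>)"
  using rho assms by (auto simp: resolvent_set_def)

lemma R_hom: "\<mu> \<in> L0_pp M \<Longrightarrow> is_module_hom M sm UNIV (R \<mu>)"
  using res_set(2) by (simp add: in_BS_def)

lemma R_in_D: "\<mu> \<in> L0_pp M \<Longrightarrow> R \<mu> y \<in> D"
  using res_set(1)[of \<mu>] unfolding resolvent_def bij_betw_def
  by (intro the_inv_into_into) auto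

lemma R_right: "\<mu> \<in> L0_pp M \<Longrightarrow> sm (K \<mu>) (R \<mu> y) - A (R \<mu> y) = y"
  using res_set(1)[of \<mu>] f_the_inv_into_f[of "shifted_op sm (K \<mu>) A" D y]
  unfolding resolvent_def bij_betw_def by (auto simp: shifted_op_def)

lemma R_left: "\<mu> \<in> L0_pp M \<Longrightarrow> z \<in> D \<Longrightarrow> R \<mu> (sm (K \<mu>) z - A z) = z"
  using res_set(1)[of \<mu>] the_inv_into_f_f[of "shifted_op sm (K \<mu>) A" D z]
  unfolding resolvent_def bij_betw_def by (auto simp: shifted_op_def)

lemma res_identity:
  assumes l: "la \<in> L0_pp M" and m: "\<mu> \<in> L0_pp M"
  shows "R la y = R \<mu> y + sm (K (\<lambda>\<omega>. \<mu> \<omega> - la \<omega>)) (R \<mu> (R la y))"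
proof -
  have [measurable]: "la \<in> borel_measurable M" "\<mu> \<in> borel_measurable M" using l m by (auto simp: pp_meas)
  define u where "u = R la y"
  have uD: "u \<in> D" unfolding u_def using l by (rule R_in_D)
  have e: "sm (K la) u - A u = y" unfolding u_def using l by (rule R_right)
  have "sm (K la) u + sm (K (\<lambda>\<omega>. \<mu> \<omega> - la \<omega>)) u = sm (K \<mu>) u"
    by (subst sm_K_add) auto
  then have "sm (K \<mu>) u - A u = sm (K (\<lambda>\<omega>. \<mu> \<omega> - la \<omega>)) u + (sm (K la) u - A u)"
    by (metis add.commute add_diff_eq)
  then have "sm (K \<mu>) u - A u = sm (K (\<lambda>\<omega>. \<mu> \<omega> - la \<omega>)) u + y" unfolding e .
  then have "u = R \<mu> (sm (K (\<lambda>\<omega>. \<mu> \<omega> - la \<omega>)) u + y)"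
    using R_left[OF m uD] by simp
  also have "\<dots> = sm (K (\<lambda>\<omega>. \<mu> \<omega> - la \<omega>)) (R \<mu> u) + R \<mu> y"
  proof -
    have kL: "K (\<lambda>\<omega>. \<mu> \<omega> - la \<omega>) \<in> L0 M" by (rule K_L0) measurable
    show ?thesis by (simp only: hom_add[OF R_hom[OF m]] hom_sm[OF R_hom[OF m] kL])
  qed
  finally show ?thesis unfolding u_def by (simp add: add.commute)
qed

end

context hy
begin

definition S :: "nat \<Rightarrow> ('w \<Rightarrow> real) \<Rightarrow> 's \<Rightarrow> 's" where
  "S n \<mu> x = sm (K (\<lambda>\<omega>. \<mu> \<omega> ^ n)) ((R \<mu> ^^ n) x)"

definition p :: "('w \<Rightarrow> real) \<Rightarrow> 's \<Rightarrow> 'w \<Rightarrow> real" where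
  "p \<mu> x \<omega> = (SUP n. nrm (S n \<mu> x) \<omega>)"

lemma S_BS: assumes m: "\<mu> \<in> L0_pp M" shows "in_BS M sm nrm (S n \<mu>)"
proof -
  have [measurable]: "\<mu> \<in> borel_measurable M" using m by (rule pp_meas)
  have kL: "K (\<lambda>\<omega>. \<mu> \<omega> ^ n) \<in> L0 M" by (rule K_L0) measurable
  have "in_BS M sm nrm (\<lambda>x. sm (K (\<lambda>\<omega>. \<mu> \<omega> ^ n)) ((R \<mu> ^^ n) x))"
    by (rule in_BS_comp[OF in_BS_scal[OF kL] in_BS_pow[OF res_set(2)[OF m]]])
  moreover have "S n \<mu> = (\<lambda>x. sm (K (\<lambda>\<omega>. \<mu> \<omega> ^ n)) ((R \<mu> ^^ n) x))"
    by (simp add: S_def fun_eq_iff)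
  ultimately show ?thesis by simp
qed

lemma S_hom: "\<mu> \<in> L0_pp M \<Longrightarrow> is_module_hom M sm UNIV (S n \<mu>)"
  using S_BS by (simp add: in_BS_def)

lemma S0: "S 0 \<mu> x = x"
  using K_one[of x] by (simp add: S_def)

lemma S_bound:
  assumes m: "\<mu> \<in> L0_pp M"
  shows "AE \<omega> in M. nrm (S n \<mu> x) \<omega> \<le> Mb \<omega> * nrm x \<omega>"
proof (cases "n = 0")
  case True
  show ?thesis using Mb_ge1 nrm_nonneg[of x] unfolding True S0
    by eventually_elim (metis mult_le_cancel_right1 not_less order.trans order_refl mult_left_mono
        mult_1 mult.commute)
next
  case False
  then have n1: "n \<ge> 1" by simp
  have eqS: "S n \<mu> = (\<lambda>x. sm (\<lambda>\<omega>. of_real (\<mu> \<omega> ^ n)) ((resolvent sm D A (\<lambda>\<omega>. of_real (\<mu> \<omega>)) ^^ n) x))"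
    by (simp add: S_def fun_eq_iff)
  have b: "AE \<omega> in M. L0_opnorm M nrm (S n \<mu>) \<omega> \<le> Mb \<omega>"
    using bound n1 m unfolding eqS by blast
  show ?thesis using opnorm_bound[OF S_BS[OF m], of n x] b nrm_nonneg[of x]
    by eventually_elim (metis mult_right_mono order_trans)
qed

lemma S_Suc:
  assumes m: "\<mu> \<in> L0_pp M"
  shows "S (Suc n) \<mu> x = sm (K \<mu>) (R \<mu> (S n \<mu> x))"
proof -
  have [measurable]: "\<mu> \<in> borel_measurable M" using m by (rule pp_meas)
  have kL: "K (\<lambda>\<omega>. \<mu> \<omega> ^ n) \<in> L0 M" by (rule K_L0) measurable
  have "R \<mu> (S n \<mu> x) = sm (K (\<lambda>\<omega>. \<mu> \<omega> ^ n)) ((R \<mu> ^^ Suc n) x)"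
    unfolding S_def by (simp only: hom_sm[OF R_hom[OF m] kL] funpow.simps(2) o_apply)
  moreover have "sm (K \<mu>) (sm (K (\<lambda>\<omega>. \<mu> \<omega> ^ n)) w) = sm (K (\<lambda>\<omega>. \<mu> \<omega> * \<mu> \<omega> ^ n)) w" for w
    by (rule sm_KK) measurable
  ultimately have "sm (K \<mu>) (R \<mu> (S n \<mu> x)) = sm (K (\<lambda>\<omega>. \<mu> \<omega> * \<mu> \<omega> ^ n)) ((R \<mu> ^^ Suc n) x)"
    by simp
  then show ?thesis by (simp add: S_def)
qed

lemma S_Suc':
  assumes m: "\<mu> \<in> L0_pp M"
  shows "S n \<mu> (sm (K \<mu>) (R \<mu> z)) = S (Suc n) \<mu> z"
proof -
  have [measurable]: "\<mu> \<in> borel_measurable M" using m by (rule pp_meas)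
  have kL: "K \<mu> \<in> L0 M" by (rule K_L0) measurable
  have h: "is_module_hom M sm UNIV (R \<mu> ^^ n)" using in_BS_pow[OF res_set(2)[OF m]] by (simp add: in_BS_def)
  have "(R \<mu> ^^ n) (sm (K \<mu>) (R \<mu> z)) = sm (K \<mu>) ((R \<mu> ^^ Suc n) z)"
    by (simp only: hom_sm[OF h kL] funpow_Suc_right o_apply)
  moreover have "sm (K (\<lambda>\<omega>. \<mu> \<omega> ^ n)) (sm (K \<mu>) w) = sm (K (\<lambda>\<omega>. \<mu> \<omega> ^ n * \<mu> \<omega>)) w" for w
    by (rule sm_KK) measurable
  ultimately have "S n \<mu> (sm (K \<mu>) (R \<mu> z)) = sm (K (\<lambda>\<omega>. \<mu> \<omega> ^ n * \<mu> \<omega>)) ((R \<mu> ^^ Suc n) z)"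
    unfolding S_def by simp
  then show ?thesis by (simp add: S_def power_Suc2 mult.commute)
qed

lemma S_add: "\<mu> \<in> L0_pp M \<Longrightarrow> S n \<mu> (x + y) = S n \<mu> x + S n \<mu> y"
  using hom_add[OF S_hom] by blast
lemma S_sm: "\<mu> \<in> L0_pp M \<Longrightarrow> c \<in> L0 M \<Longrightarrow> S n \<mu> (sm c x) = sm c (S n \<mu> x)"
  using hom_sm[OF S_hom] by blast

lemma p_meas[measurable]: "p \<mu> x \<in> borel_measurable M"
proof -
  have "(\<lambda>\<omega>. SUP n. nrm (S n \<mu> x) \<omega>) \<in> borel_measurable M" by measurable
  then show ?thesis by (simp add: p_def[abs_def])
qed

lemma p_char:
  assumes m: "\<mu> \<in> L0_pp M"
  shows "AE \<omega> in M. (\<forall>n. nrm (S n \<mu> x) \<omega> \<le> p \<mu> x \<omega>) \<and>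
     (\<forall>c. (\<forall>n. nrm (S n \<mu> x) \<omega> \<le> c) \<longrightarrow> p \<mu> x \<omega> \<le> c)"
proof -
  have "AE \<omega> in M. \<forall>n. nrm (S n \<mu> x) \<omega> \<le> Mb \<omega> * nrm x \<omega>"
    unfolding AE_all_countable using S_bound[OF m] by blast
  then show ?thesis
  proof eventually_elim
    case (elim \<omega>)
    then have bdd: "bdd_above (range (\<lambda>n. nrm (S n \<mu> x) \<omega>))" by (intro bdd_aboveI2) auto
    show ?case unfolding p_def using bdd by (auto intro: cSUP_upper cSUP_least)
  qed
qed

lemma p_ge: assumes m: "\<mu> \<in> L0_pp M" shows "AE \<omega> in M. nrm x \<omega> \<le> p \<mu> x \<omega>"
  using p_char[OF m, of x] by eventually_elim (metis S0)

lemma p_nonneg: assumes m: "\<mu> \<in> L0_pp M" shows "AE \<omega> in M. 0 \<le> p \<mu> x \<omega>"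
  using p_ge[OF m, of x] nrm_nonneg[of x] by eventually_elim simp

lemma p_le: "\<mu> \<in> L0_pp M \<Longrightarrow> AE \<omega> in M. p \<mu> x \<omega> \<le> Mb \<omega> * nrm x \<omega>"
proof -
  assume m: "\<mu> \<in> L0_pp M"
  have "AE \<omega> in M. \<forall>n. nrm (S n \<mu> x) \<omega> \<le> Mb \<omega> * nrm x \<omega>"
    unfolding AE_all_countable using S_bound[OF m] by blast
  then show ?thesis using p_char[OF m, of x] by eventually_elim blast
qed

lemma p_tri:
  assumes m: "\<mu> \<in> L0_pp M"
  shows "AE \<omega> in M. p \<mu> (x + y) \<omega> \<le> p \<mu> x \<omega> + p \<mu> y \<omega>"
proof -
  have "AE \<omega> in M. \<forall>n. nrm (S n \<mu> x + S n \<mu> y) \<omega> \<le> nrm (S n \<mu> x) \<omega> + nrm (S n \<mu> y) \<omega>"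
    unfolding AE_all_countable using nrm_tri by blast
  then show ?thesis using p_char[OF m, of "x + y"] p_char[OF m, of x] p_char[OF m, of y]
  proof eventually_elim
    case (elim \<omega>)
    have "\<forall>n. nrm (S n \<mu> (x + y)) \<omega> \<le> p \<mu> x \<omega> + p \<mu> y \<omega>"
      using elim by (simp add: S_add[OF m]) (meson add_mono order_trans)
    then show ?case using elim by blast
  qed
qed

lemma p_sm:
  assumes m: "\<mu> \<in> L0_pp M" and c: "c \<in> L0 M"
  shows "AE \<omega> in M. p \<mu> (sm c x) \<omega> = norm (c \<omega>) * p \<mu> x \<omega>"
proof -
  have "AE \<omega> in M. \<forall>n. nrm (S n \<mu> (sm c x)) \<omega> = norm (c \<omega>) * nrm (S n \<mu> x) \<omega>"
    unfolding AE_all_countable S_sm[OF m c] using nrm_sm[OF c] by blast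
  then show ?thesis using p_char[OF m, of "sm c x"] p_char[OF m, of x] p_nonneg[OF m, of "sm c x"]
  proof eventually_elim
    case (elim \<omega>)
    let ?c = "norm (c \<omega>)"
    have up: "p \<mu> (sm c x) \<omega> \<le> ?c * p \<mu> x \<omega>"
    proof -
      have "\<forall>n. nrm (S n \<mu> (sm c x)) \<omega> \<le> ?c * p \<mu> x \<omega>"
        using elim by (simp add: mult_left_mono)
      then show ?thesis using elim by blast
    qed
    have lo: "?c * p \<mu> x \<omega> \<le> p \<mu> (sm c x) \<omega>"
    proof (cases "?c = 0")
      case True then show ?thesis using elim by simp
    next
      case False
      then have cp: "?c > 0" by simp
      have "\<forall>n. nrm (S n \<mu> x) \<omega> \<le> p \<mu> (sm c x) \<omega> / ?c"
      proof
        fix n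
        have "?c * nrm (S n \<mu> x) \<omega> \<le> p \<mu> (sm c x) \<omega>" using elim by metis
        then show "nrm (S n \<mu> x) \<omega> \<le> p \<mu> (sm c x) \<omega> / ?c" using cp
          by (simp add: le_divide_eq mult.commute)
      qed
      then have "p \<mu> x \<omega> \<le> p \<mu> (sm c x) \<omega> / ?c" using elim by blast
      then show ?thesis using cp by (simp add: le_divide_eq mult.commute)
    qed
    show ?case using up lo by simp
  qed
qed

lemma p_shift:
  assumes m: "\<mu> \<in> L0_pp M"
  shows "AE \<omega> in M. p \<mu> (sm (K \<mu>) (R \<mu> z)) \<omega> \<le> p \<mu> z \<omega>"
  using p_char[OF m, of "sm (K \<mu>) (R \<mu> z)"] p_char[OF m, of z]
  by eventually_elim (simp add: S_Suc'[OF m])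

end

context hy
begin

lemma pazy:
  assumes l: "la \<in> L0_pp M" and m: "\<mu> \<in> L0_pp M" and le: "AE \<omega> in M. la \<omega> \<le> \<mu> \<omega>"
  shows "AE \<omega> in M. p \<mu> (sm (K la) (R la y)) \<omega> \<le> p \<mu> y \<omega>"
proof -
  have laM[measurable]: "la \<in> borel_measurable M" and muM[measurable]: "\<mu> \<in> borel_measurable M"
    using l m by (auto simp: pp_meas)
  define z where "z = sm (K la) (R la y)"
  define a where "a \<omega> = la \<omega> / \<mu> \<omega>" for \<omega>
  define b where "b \<omega> = (\<mu> \<omega> - la \<omega>) / \<mu> \<omega>" for \<omega>
  have aM[measurable]: "a \<in> borel_measurable M" unfolding a_def by measurable
  have bM[measurable]: "b \<in> borel_measurable M" unfolding b_def by measurable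
  define w1 where "w1 = sm (K \<mu>) (R \<mu> y)"
  define w2 where "w2 = sm (K \<mu>) (R \<mu> z)"
  have kla: "K la \<in> L0 M" by (rule K_L0) measurable
  have kml: "K (\<lambda>\<omega>. \<mu> \<omega> - la \<omega>) \<in> L0 M" by (rule K_L0) measurable
  have e1: "sm (K a) w1 = sm (K la) (R \<mu> y)"
  proof -
    have "sm (K a) w1 = sm (K (\<lambda>\<omega>. a \<omega> * \<mu> \<omega>)) (R \<mu> y)" unfolding w1_def by (rule sm_KK) measurable
    also have "\<dots> = sm (K la) (R \<mu> y)"
    proof -
      have mA: "(\<lambda>\<omega>. a \<omega> * \<mu> \<omega>) \<in> borel_measurable M" by measurable
      have "AE \<omega> in M. a \<omega> * \<mu> \<omega> = la \<omega>" using pp_pos[OF m] by eventually_elim (simp add: a_def)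
      then show ?thesis by (rule sm_K_cong[OF mA laM])
    qed
    finally show ?thesis .
  qed
  have e2: "sm (K b) w2 = sm (K la) (sm (K (\<lambda>\<omega>. \<mu> \<omega> - la \<omega>)) (R \<mu> (R la y)))"
  proof -
    have "sm (K b) w2 = sm (K (\<lambda>\<omega>. b \<omega> * \<mu> \<omega>)) (R \<mu> z)" unfolding w2_def by (rule sm_KK) measurable
    also have "\<dots> = sm (K (\<lambda>\<omega>. \<mu> \<omega> - la \<omega>)) (R \<mu> z)"
    proof -
      have mB: "(\<lambda>\<omega>. b \<omega> * \<mu> \<omega>) \<in> borel_measurable M" by measurable
      have mC: "(\<lambda>\<omega>. \<mu> \<omega> - la \<omega>) \<in> borel_measurable M" by measurable
      have "AE \<omega> in M. b \<omega> * \<mu> \<omega> = \<mu> \<omega> - la \<omega>" using pp_pos[OF m] by eventually_elim (simp add: b_def)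
      then show ?thesis by (rule sm_K_cong[OF mB mC])
    qed
    also have "R \<mu> z = sm (K la) (R \<mu> (R la y))" unfolding z_def by (rule hom_sm[OF R_hom[OF m] kla])
    also have "sm (K (\<lambda>\<omega>. \<mu> \<omega> - la \<omega>)) (sm (K la) (R \<mu> (R la y))) =
       sm (K la) (sm (K (\<lambda>\<omega>. \<mu> \<omega> - la \<omega>)) (R \<mu> (R la y)))" by (rule sm_comm[OF kml kla])
    finally show ?thesis .
  qed
  have dec: "z = sm (K a) w1 + sm (K b) w2"
  proof -
    have "z = sm (K la) (R \<mu> y + sm (K (\<lambda>\<omega>. \<mu> \<omega> - la \<omega>)) (R \<mu> (R la y)))"
      unfolding z_def by (subst res_identity[OF l m]) (rule refl)
    also have "\<dots> = sm (K a) w1 + sm (K b) w2" unfolding e1 e2 by (rule sm_add_vec[OF kla])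
    finally show ?thesis .
  qed
  have A1: "AE \<omega> in M. p \<mu> z \<omega> \<le> p \<mu> (sm (K a) w1) \<omega> + p \<mu> (sm (K b) w2) \<omega>"
    using p_tri[OF m, of "sm (K a) w1" "sm (K b) w2"] unfolding dec[symmetric] .
  have A2: "AE \<omega> in M. p \<mu> (sm (K a) w1) \<omega> = norm (K a \<omega>) * p \<mu> w1 \<omega>"
    by (rule p_sm[OF m K_L0[OF aM]])
  have A3: "AE \<omega> in M. p \<mu> (sm (K b) w2) \<omega> = norm (K b \<omega>) * p \<mu> w2 \<omega>"
    by (rule p_sm[OF m K_L0[OF bM]])
  have A4: "AE \<omega> in M. p \<mu> w1 \<omega> \<le> p \<mu> y \<omega>" unfolding w1_def by (rule p_shift[OF m])
  have A5: "AE \<omega> in M. p \<mu> w2 \<omega> \<le> p \<mu> z \<omega>" unfolding w2_def by (rule p_shift[OF m])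
  have "AE \<omega> in M. p \<mu> z \<omega> \<le> p \<mu> y \<omega>"
    using A1 A2 A3 A4 A5 le pp_pos[OF l] pp_pos[OF m]
  proof eventually_elim
    case (elim \<omega>)
    have ap: "a \<omega> > 0" using elim by (simp add: a_def)
    have bn: "b \<omega> \<ge> 0" using elim by (simp add: b_def)
    have na: "norm (K a \<omega>) = a \<omega>" using ap by simp
    have nb: "norm (K b \<omega>) = b \<omega>" using bn by simp
    have ab: "b \<omega> = 1 - a \<omega>" using elim by (simp add: a_def b_def field_simps)
    have "p \<mu> z \<omega> \<le> a \<omega> * p \<mu> w1 \<omega> + b \<omega> * p \<mu> w2 \<omega>" using elim na nb by simp
    also have "\<dots> \<le> a \<omega> * p \<mu> y \<omega> + b \<omega> * p \<mu> z \<omega>"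
      using elim ap bn by (intro add_mono mult_left_mono) auto
    finally have "a \<omega> * p \<mu> z \<omega> \<le> a \<omega> * p \<mu> y \<omega>" unfolding ab by (simp add: algebra_simps)
    then show ?case using ap by simp
  qed
  then show ?thesis unfolding z_def .
qed

lemma p_mono:
  assumes l: "la \<in> L0_pp M" and m: "\<mu> \<in> L0_pp M" and le: "AE \<omega> in M. la \<omega> \<le> \<mu> \<omega>"
  shows "AE \<omega> in M. p la x \<omega> \<le> p \<mu> x \<omega>"
proof -
  have step: "AE \<omega> in M. p \<mu> (S n la x) \<omega> \<le> p \<mu> x \<omega>" for n
  proof (induction n)
    case 0 show ?case by (simp add: S0)
  next
    case (Suc n)
    have "AE \<omega> in M. p \<mu> (S (Suc n) la x) \<omega> \<le> p \<mu> (S n la x) \<omega>"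
      unfolding S_Suc[OF l] by (rule pazy[OF l m le])
    then show ?case using Suc.IH by eventually_elim simp
  qed
  have "AE \<omega> in M. \<forall>n. nrm (S n la x) \<omega> \<le> p \<mu> x \<omega>"
    unfolding AE_all_countable
  proof
    fix n show "AE \<omega> in M. nrm (S n la x) \<omega> \<le> p \<mu> x \<omega>"
      using p_ge[OF m, of "S n la x"] step[of n] by eventually_elim simp
  qed
  then show ?thesis using p_char[OF l, of x] by eventually_elim blast
qed

lemma one_pp: "(\<lambda>\<omega>. 1) \<in> L0_pp M"
  by (simp add: L0_pp_def)

lemma max_pp: "a \<in> L0_pp M \<Longrightarrow> b \<in> L0_pp M \<Longrightarrow> (\<lambda>\<omega>. max (a \<omega>) (b \<omega>)) \<in> L0_pp M"
proof -
  assume a: "a \<in> L0_pp M" and b: "b \<in> L0_pp M"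
  have [measurable]: "a \<in> borel_measurable M" "b \<in> borel_measurable M" using a b by (auto simp: pp_meas)
  have "(\<lambda>\<omega>. max (a \<omega>) (b \<omega>)) \<in> borel_measurable M" by measurable
  moreover have "AE \<omega> in M. 0 < max (a \<omega>) (b \<omega>)" using pp_pos[OF a] by eventually_elim simp
  ultimately show ?thesis by (simp add: L0_pp_def)
qed

definition ess :: "'s \<Rightarrow> 'w \<Rightarrow> real" where
  "ess x = (SOME g. g \<in> borel_measurable M \<and> (\<forall>\<mu>\<in>L0_pp M. AE \<omega> in M. p \<mu> x \<omega> \<le> g \<omega>) \<and>
      (\<forall>h. (\<forall>\<mu>\<in>L0_pp M. AE \<omega> in M. p \<mu> x \<omega> \<le> h \<omega>) \<longrightarrow> (AE \<omega> in M. g \<omega> \<le> h \<omega>)))"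

lemma ess_ex: "\<exists>g. g \<in> borel_measurable M \<and> (\<forall>\<mu>\<in>L0_pp M. AE \<omega> in M. p \<mu> x \<omega> \<le> g \<omega>) \<and>
      (\<forall>h. (\<forall>\<mu>\<in>L0_pp M. AE \<omega> in M. p \<mu> x \<omega> \<le> h \<omega>) \<longrightarrow> (AE \<omega> in M. g \<omega> \<le> h \<omega>))"
proof -
  define F where "F = (\<lambda>\<mu>. p \<mu> x) ` L0_pp M"
  have Fm: "F \<subseteq> borel_measurable M" by (auto simp: F_def)
  have Fne: "F \<noteq> {}" using one_pp by (auto simp: F_def)
  have dir: "\<forall>f\<in>F. \<forall>g\<in>F. \<exists>h\<in>F. AE \<omega> in M. f \<omega> \<le> h \<omega> \<and> g \<omega> \<le> h \<omega>"
  proof (intro ballI)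
    fix f g assume "f \<in> F" "g \<in> F"
    then obtain \<mu>1 \<mu>2 where m: "\<mu>1 \<in> L0_pp M" "\<mu>2 \<in> L0_pp M" and fg: "f = p \<mu>1 x" "g = p \<mu>2 x"
      by (auto simp: F_def)
    define \<nu> where "\<nu> = (\<lambda>\<omega>. max (\<mu>1 \<omega>) (\<mu>2 \<omega>))"
    have n: "\<nu> \<in> L0_pp M" unfolding \<nu>_def by (rule max_pp[OF m])
    have hF: "p \<nu> x \<in> F" using n by (auto simp: F_def)
    have hAE: "AE \<omega> in M. f \<omega> \<le> p \<nu> x \<omega> \<and> g \<omega> \<le> p \<nu> x \<omega>"
      using p_mono[OF m(1) n, of x] p_mono[OF m(2) n, of x] unfolding fg \<nu>_def
      by (simp add: eventually_conj_iff)
    show "\<exists>h\<in>F. AE \<omega> in M. f \<omega> \<le> h \<omega> \<and> g \<omega> \<le> h \<omega>" using hAE hF by (rule bexI)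
  qed
  obtain fs where fsall: "(\<forall>k. fs k \<in> F) \<and> (AE \<omega> in M. \<forall>k. fs k \<omega> \<le> fs (Suc k) \<omega>) \<and>
        (\<forall>f\<in>F. AE \<omega> in M. \<forall>c. (\<forall>k. fs k \<omega> \<le> c) \<longrightarrow> f \<omega> \<le> c)"
    using directed_esssup[OF prob Fm Fne dir] by (rule exE)
  have fsF: "\<forall>k. fs k \<in> F" by (rule conjunct1[OF fsall])
  have sup: "\<forall>f\<in>F. AE \<omega> in M. \<forall>c. (\<forall>k. fs k \<omega> \<le> c) \<longrightarrow> f \<omega> \<le> c"
    by (rule conjunct2[OF conjunct2[OF fsall]])
  have "\<forall>k. \<exists>\<mu>. \<mu> \<in> L0_pp M \<and> fs k = p \<mu> x" using fsF by (auto simp: F_def)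
  then have "\<exists>ms. \<forall>k. ms k \<in> L0_pp M \<and> fs k = p (ms k) x" by (rule choice)
  then obtain ms where msP: "\<And>k. ms k \<in> L0_pp M" and fsm: "\<And>k. fs k = p (ms k) x" by blast
  have fsM[measurable]: "fs k \<in> borel_measurable M" for k unfolding fsm by simp
  define g where "g \<omega> = (SUP k. fs k \<omega>)" for \<omega>
  have gM: "g \<in> borel_measurable M" unfolding g_def by measurable
  have bd: "AE \<omega> in M. \<forall>k. fs k \<omega> \<le> Mb \<omega> * nrm x \<omega>"
    unfolding AE_all_countable fsm using p_le[OF msP] by blast
  have up: "\<forall>\<mu>\<in>L0_pp M. AE \<omega> in M. p \<mu> x \<omega> \<le> g \<omega>"
  proof
    fix \<mu> assume m: "\<mu> \<in> L0_pp M"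
    then have "p \<mu> x \<in> F" by (auto simp: F_def)
    then have "AE \<omega> in M. \<forall>c. (\<forall>k. fs k \<omega> \<le> c) \<longrightarrow> p \<mu> x \<omega> \<le> c" using bspec[OF sup] by blast
    then show "AE \<omega> in M. p \<mu> x \<omega> \<le> g \<omega>" using bd
    proof eventually_elim
      case (elim \<omega>)
      have "bdd_above (range (\<lambda>k. fs k \<omega>))" using elim by (intro bdd_aboveI2) auto
      then have "\<forall>k. fs k \<omega> \<le> g \<omega>" unfolding g_def by (auto intro: cSUP_upper)
      then show ?case using elim by blast
    qed
  qed
  have least: "\<forall>h. (\<forall>\<mu>\<in>L0_pp M. AE \<omega> in M. p \<mu> x \<omega> \<le> h \<omega>) \<longrightarrow> (AE \<omega> in M. g \<omega> \<le> h \<omega>)"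
  proof (intro allI impI)
    fix h :: "'w \<Rightarrow> real" assume a: "\<forall>\<mu>\<in>L0_pp M. AE \<omega> in M. p \<mu> x \<omega> \<le> h \<omega>"
    have "AE \<omega> in M. \<forall>k. fs k \<omega> \<le> h \<omega>"
      unfolding AE_all_countable fsm using a msP by blast
    then show "AE \<omega> in M. g \<omega> \<le> h \<omega>"
      by eventually_elim (auto simp: g_def intro: cSUP_least)
  qed
  show ?thesis using gM up least by blast
qed

lemma ess_props: "ess x \<in> borel_measurable M \<and> (\<forall>\<mu>\<in>L0_pp M. AE \<omega> in M. p \<mu> x \<omega> \<le> ess x \<omega>) \<and>
      (\<forall>h. (\<forall>\<mu>\<in>L0_pp M. AE \<omega> in M. p \<mu> x \<omega> \<le> h \<omega>) \<longrightarrow> (AE \<omega> in M. ess x \<omega> \<le> h \<omega>))"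
  unfolding ess_def by (rule someI_ex[OF ess_ex])

lemma ess_meas[measurable]: "ess x \<in> borel_measurable M"
  using ess_props by blast
lemma ess_upper: "\<mu> \<in> L0_pp M \<Longrightarrow> AE \<omega> in M. p \<mu> x \<omega> \<le> ess x \<omega>"
  using ess_props by blast
lemma ess_least: "(\<And>\<mu>. \<mu> \<in> L0_pp M \<Longrightarrow> AE \<omega> in M. p \<mu> x \<omega> \<le> h \<omega>) \<Longrightarrow> AE \<omega> in M. ess x \<omega> \<le> h \<omega>"
  using ess_props by blast

lemma ess_ge: "AE \<omega> in M. nrm x \<omega> \<le> ess x \<omega>"
  using p_ge[OF one_pp, of x] ess_upper[OF one_pp, of x] by eventually_elim simp

lemma ess_nonneg: "AE \<omega> in M. 0 \<le> ess x \<omega>"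
  using ess_ge[of x] nrm_nonneg[of x] by eventually_elim simp

lemma ess_le: "AE \<omega> in M. ess x \<omega> \<le> Mb \<omega> * nrm x \<omega>"
  by (rule ess_least) (rule p_le)

lemma ess_tri: "AE \<omega> in M. ess (x + y) \<omega> \<le> ess x \<omega> + ess y \<omega>"
proof (rule ess_least)
  fix \<mu> assume m: "\<mu> \<in> L0_pp M"
  show "AE \<omega> in M. p \<mu> (x + y) \<omega> \<le> ess x \<omega> + ess y \<omega>"
    using p_tri[OF m, of x y] ess_upper[OF m, of x] ess_upper[OF m, of y] by eventually_elim simp
qed

lemma ess_sm:
  assumes c: "c \<in> L0 M"
  shows "AE \<omega> in M. ess (sm c x) \<omega> = norm (c \<omega>) * ess x \<omega>"
proof -
  have up: "AE \<omega> in M. ess (sm c x) \<omega> \<le> norm (c \<omega>) * ess x \<omega>"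
  proof (rule ess_least)
    fix \<mu> assume m: "\<mu> \<in> L0_pp M"
    show "AE \<omega> in M. p \<mu> (sm c x) \<omega> \<le> norm (c \<omega>) * ess x \<omega>"
      using p_sm[OF m c, of x] ess_upper[OF m, of x] by eventually_elim (simp add: mult_left_mono)
  qed
  define h where "h \<omega> = (if 0 < norm (c \<omega>) then ess (sm c x) \<omega> / norm (c \<omega>) else ess x \<omega>)" for \<omega>
  have lo: "AE \<omega> in M. ess x \<omega> \<le> h \<omega>"
  proof (rule ess_least)
    fix \<mu> assume m: "\<mu> \<in> L0_pp M"
    show "AE \<omega> in M. p \<mu> x \<omega> \<le> h \<omega>"
      using p_sm[OF m c, of x] ess_upper[OF m, of "sm c x"] ess_upper[OF m, of x]
    proof eventually_elim
      case (elim \<omega>)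
      show ?case
      proof (cases "0 < norm (c \<omega>)")
        case True
        then show ?thesis using elim by (simp add: h_def le_divide_eq mult.commute)
      next
        case False
        then show ?thesis using elim by (simp add: h_def)
      qed
    qed
  qed
  show ?thesis using up lo ess_nonneg[of "sm c x"]
  proof eventually_elim
    case (elim \<omega>)
    show ?case
    proof (cases "0 < norm (c \<omega>)")
      case True
      then have "norm (c \<omega>) * ess x \<omega> \<le> ess (sm c x) \<omega>"
        using elim by (simp add: h_def le_divide_eq mult.commute)
      then show ?thesis using elim by simp
    next
      case False
      then have "norm (c \<omega>) = 0" by simp
      then show ?thesis using elim by simp
    qed
  qed
qed

lemma ess_contr:
  assumes l: "la \<in> L0_pp M"
  shows "AE \<omega> in M. ess (sm (K la) (R la x)) \<omega> \<le> ess x \<omega>"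
proof (rule ess_least)
  fix \<mu> assume m: "\<mu> \<in> L0_pp M"
  define \<nu> where "\<nu> = (\<lambda>\<omega>. max (la \<omega>) (\<mu> \<omega>))"
  have n: "\<nu> \<in> L0_pp M" unfolding \<nu>_def by (rule max_pp[OF l m])
  have "AE \<omega> in M. p \<mu> (sm (K la) (R la x)) \<omega> \<le> p \<nu> (sm (K la) (R la x)) \<omega>"
    by (rule p_mono[OF m n]) (simp add: \<nu>_def)
  moreover have "AE \<omega> in M. p \<nu> (sm (K la) (R la x)) \<omega> \<le> p \<nu> x \<omega>"
    by (rule pazy[OF l n]) (simp add: \<nu>_def)
  moreover have "AE \<omega> in M. p \<nu> x \<omega> \<le> ess x \<omega>" by (rule ess_upper[OF n])
  ultimately show "AE \<omega> in M. p \<mu> (sm (K la) (R la x)) \<omega> \<le> ess x \<omega>"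
    by eventually_elim simp
qed

lemma ess_norm: "is_L0_norm M sm ess"
  unfolding is_L0_norm_def
proof (intro conjI allI ballI impI)
  fix x show "ess x \<in> L0_plus M" unfolding L0_plus_def using ess_nonneg[of x] by simp
next
  fix \<xi> :: "'w \<Rightarrow> 'k" and x assume "\<xi> \<in> L0 M" then show "AE \<omega> in M. ess (sm \<xi> x) \<omega> = norm (\<xi> \<omega>) * ess x \<omega>"
    by (rule ess_sm)
next
  fix x y show "AE \<omega> in M. ess (x + y) \<omega> \<le> ess x \<omega> + ess y \<omega>" by (rule ess_tri)
next
  fix x assume "AE \<omega> in M. ess x \<omega> = 0"
  then have "AE \<omega> in M. nrm x \<omega> = 0" using ess_ge[of x] nrm_nonneg[of x] by eventually_elim simp
  then show "x = 0" by (rule nrm_eq0)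
qed

lemma ess_equiv: "equivalent_L0_norms M nrm ess"
  unfolding equivalent_L0_norms_def
proof (intro allI iffI)
  fix xs x
  have MbM: "Mb \<in> borel_measurable M" using Mb_L0 by (simp add: L0_plus_def)
  assume a: "eps_lambda_conv M nrm xs x"
  show "eps_lambda_conv M ess xs x" unfolding eps_lambda_conv_def
  proof (rule conv_scale[OF prob MbM, where f="\<lambda>n. nrm (xs n - x)"])
    show "\<forall>\<epsilon>>0. (\<lambda>n. measure M {\<omega> \<in> space M. \<epsilon> \<le> nrm (xs n - x) \<omega>}) \<longlonglongrightarrow> 0"
      using a unfolding eps_lambda_conv_def by simp
    fix n show "AE \<omega> in M. ess (xs n - x) \<omega> \<le> Mb \<omega> * nrm (xs n - x) \<omega> \<and> 0 \<le> nrm (xs n - x) \<omega>"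
      using ess_le[of "xs n - x"] nrm_nonneg[of "xs n - x"] by eventually_elim simp
  qed simp_all
next
  fix xs x
  have oM: "(\<lambda>_. 1::real) \<in> borel_measurable M" by simp
  assume a: "eps_lambda_conv M ess xs x"
  show "eps_lambda_conv M nrm xs x" unfolding eps_lambda_conv_def
  proof (rule conv_scale[OF prob oM, where f="\<lambda>n. ess (xs n - x)"])
    show "\<forall>\<epsilon>>0. (\<lambda>n. measure M {\<omega> \<in> space M. \<epsilon> \<le> ess (xs n - x) \<omega>}) \<longlonglongrightarrow> 0"
      using a unfolding eps_lambda_conv_def by simp
    fix n show "AE \<omega> in M. nrm (xs n - x) \<omega> \<le> 1 * ess (xs n - x) \<omega> \<and> 0 \<le> ess (xs n - x) \<omega>"
      using ess_ge[of "xs n - x"] ess_nonneg[of "xs n - x"] by eventually_elim simp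
  qed simp_all
qed

end

theorem lemma4p8:
  fixes M :: "'w measure"
    and sm :: "('w \<Rightarrow> 'k::real_normed_field) \<Rightarrow> 's::ab_group_add \<Rightarrow> 's"
    and nrm :: "'s \<Rightarrow> 'w \<Rightarrow> real"
    and D :: "'s set" and A :: "'s \<Rightarrow> 's"
    and Mb :: "'w \<Rightarrow> real"
  assumes RN: "is_RN_module M sm nrm"
    and complete: "eps_lambda_complete M nrm"
    and D_sub: "is_submodule M sm D"
    and A_hom: "is_module_hom M sm D A"
    and rho: "\<forall>\<xi>\<in>L0_pp M. (\<lambda>\<omega>. of_real (\<xi> \<omega>)) \<in> resolvent_set M sm nrm D A"
    and Mb_L0: "Mb \<in> L0_plus M"
    and Mb_ge1: "AE \<omega> in M. Mb \<omega> \<ge> 1"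
    and bound: "\<forall>n\<ge>1. \<forall>\<xi>\<in>L0_pp M. AE \<omega> in M.
       L0_opnorm M nrm (\<lambda>x. sm (\<lambda>\<omega>. of_real (\<xi> \<omega> ^ n))
                                  ((resolvent sm D A (\<lambda>\<omega>. of_real (\<xi> \<omega>)) ^^ n) x)) \<omega>
       \<le> Mb \<omega>"
  shows "\<exists>nrm' :: 's \<Rightarrow> 'w \<Rightarrow> real.
     is_L0_norm M sm nrm' \<and> equivalent_L0_norms M nrm nrm' \<and>
     (\<forall>x. AE \<omega> in M. nrm x \<omega> \<le> nrm' x \<omega> \<and> nrm' x \<omega> \<le> Mb \<omega> * nrm x \<omega>) \<and>
     (\<forall>x. \<forall>\<xi>\<in>L0_pp M. AE \<omega> in M.
        nrm' (sm (\<lambda>\<omega>. of_real (\<xi> \<omega>)) (resolvent sm D A (\<lambda>\<omega>. of_real (\<xi> \<omega>)) x)) \<omega>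
        \<le> nrm' x \<omega>)"
proof -
  interpret hy M sm nrm D A Mb
    using RN D_sub A_hom rho Mb_L0 Mb_ge1 bound
    by (simp add: hy_def hy_axioms_def rnm_def)
  have c3: "\<forall>x. AE \<omega> in M. nrm x \<omega> \<le> ess x \<omega> \<and> ess x \<omega> \<le> Mb \<omega> * nrm x \<omega>"
  proof
    fix x show "AE \<omega> in M. nrm x \<omega> \<le> ess x \<omega> \<and> ess x \<omega> \<le> Mb \<omega> * nrm x \<omega>"
      using ess_ge[of x] ess_le[of x] by eventually_elim simp
  qed
  have c4: "\<forall>x. \<forall>\<xi>\<in>L0_pp M. AE \<omega> in M.
        ess (sm (\<lambda>\<omega>. of_real (\<xi> \<omega>)) (resolvent sm D A (\<lambda>\<omega>. of_real (\<xi> \<omega>)) x)) \<omega>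
        \<le> ess x \<omega>"
    using ess_contr by blast
  show ?thesis using ess_norm ess_equiv c3 c4 by blast
qed

end
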